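(* Let $G$ be a graph with $n$ vertices. Run Algorithm LexColor on $G$ (arbitrary tie-breaking), let $\ell$ be the number of colors used, and run Algorithm Clique on $G$ with this coloring; suppose that at some step the selected vertex $x$ of color $c$ is not adjacent to all of the current set $Q$, and let $c$ be the color at the first such step. Let $x_1,\dots,x_{n_c}$ be the vertices of color $c$, in the order in which LexColor colored them, and define $G^*$ and $G^*_i$ as in the context. Let $i\in\{2,\dots,n_c\}$. If $G^*_{i-1}$ contains a bad path, then $G$ contains a near-obstruction.
   Context: Algorithm LexColor: colors are the integers $1,\dots,n$. Each vertex $x$ has a label $label_x$, a function from colors to integers, initially identically $0$. Labels are compared by the reverse lexicographic order: $label_x <_{Lex} label_y$ iff there is a color $c$ with $label_x(c)<label_y(c)$ and $label_x(c')=label_y(c')$ for all $c'>c$. For $i=1,\dots,n$: choose an uncolored vertex $x$ whose label is maximum for $<_{Lex}$; give $x$ the smallest color $c$ not present on its already-colored neighbors; then for every uncolored neighbor $y$ of $x$ with $label_y(c)=0$, set $label_y(c):=n-i$. Algorithm Clique: with colors $1,\dots,\ell$, start with $Q:=\emptyset$; for $c=\ell,\dots,1$ select a vertex $x$ of color $c$ maximizing $|N(x)\cap Q|$ and add it to $Q$. $G^*$ is the subgraph of $G$ obtained by deleting all vertices of color $<c$. $G^*_i$ is obtained from $G^*$ by deleting $x_1,\dots,x_i$ and adding a new vertex $w_i$ adjacent to every remaining vertex of $G^*$ that is adjacent (in $G$) to at least one of $x_1,\dots,x_i$. A path $v_0$-$v_1$-$\cdots$-$v_p$ consists of distinct vertices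 with $v_jv_{j+1}$ edges; its length is $p$ and it is odd if $p$ is odd; a chord is an edge between two non-consecutive vertices of the path. For $i>1$, a bad path is an odd path $P=w_{i-1}$-$v_1$-$\cdots$-$v_p$ in $G^*_{i-1}$ with $v_p=x_i$, such that $P$ has at most one chord, and such a chord (if any) is $v_{t-1}v_{t+1}$ for some $1<t<p-1$. A near-obstruction in $G$ is a pair $(P,z)$ where $P=v_0$-$\cdots$-$v_p$ is a path in $G$ with $p\ge 3$ odd, $P$ has at most one chord and such a chord (if any) is $v_{t-1}v_{t+1}$ with $0<t<p-1$, $z$ is a vertex of $G$ not on $P$ adjacent to both $v_0$ and $v_p$, and one of the following holds: (Type 1) $v_0v_2$ is the only chord of $P$ and $z$ is adjacent to neither $v_1$ nor $v_2$; (Type 2) $v_1v_3$ is the only chord of $P$ and $z$ is non-adjacent to at least one of $v_1,v_3$; (Type 3) $v_0v_2$ is not a chord of $P$ and $z$ is not adjacent to $v_1$; (Type 4) neither $v_0v_2$ nor $v_1v_3$ is a chord of $P$, and $z$ is adjacent to $v_1$ and not to $v_2$. *)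

theory Defs
  imports Main
begin

definition graph :: "'a set \<Rightarrow> ('a \<Rightarrow> 'a \<Rightarrow> bool) \<Rightarrow> bool" where
  "graph V E \<longleftrightarrow> finite V \<and> (\<forall>u v. E u v \<longrightarrow> E v u) \<and> (\<forall>u. \<not> E u u)
     \<and> (\<forall>u v. E u v \<longrightarrow> u \<in> V \<and> v \<in> V)"

text \<open>The run is recorded by the coloring order sigma (sigma!k is the vertex
  chosen at step k+1) and the resulting coloring col. Label of y before step k+1 (i.e. after
  the vertices sigma!0..sigma!(k-1) are colored): label(c) = n - (j+1) where j is the first
  position < k whose vertex is adjacent to y and has color c; 0 if there is none.\<close>
definition lex_label :: "('a \<Rightarrow> 'a \<Rightarrow> bool) \<Rightarrow> 'a list \<Rightarrow> ('a \<Rightarrow> nat) \<Rightarrow> nat \<Rightarrow> 'a \<Rightarrow> nat \<Rightarrow> nat" where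
  "lex_label E \<sigma> col k y c =
     (if \<exists>j<k. E (\<sigma>!j) y \<and> col (\<sigma>!j) = c
      then length \<sigma> - Suc (LEAST j. j < k \<and> E (\<sigma>!j) y \<and> col (\<sigma>!j) = c)
      else 0)"

definition rlex_less :: "nat \<Rightarrow> (nat \<Rightarrow> nat) \<Rightarrow> (nat \<Rightarrow> nat) \<Rightarrow> bool" where
  "rlex_less n L1 L2 \<longleftrightarrow>
     (\<exists>c\<in>{1..n}. L1 c < L2 c \<and> (\<forall>c'. c < c' \<and> c' \<le> n \<longrightarrow> L1 c' = L2 c'))"

definition lexcolor_run :: "'a set \<Rightarrow> ('a \<Rightarrow> 'a \<Rightarrow> bool) \<Rightarrow> 'a list \<Rightarrow> ('a \<Rightarrow> nat) \<Rightarrow> bool" where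
  "lexcolor_run V E \<sigma> col \<longleftrightarrow> distinct \<sigma> \<and> set \<sigma> = V \<and>
     (\<forall>k < length \<sigma>.
        col (\<sigma>!k) = (LEAST c. 0 < c \<and> (\<forall>j<k. E (\<sigma>!j) (\<sigma>!k) \<longrightarrow> col (\<sigma>!j) \<noteq> c)) \<and>
        (\<forall>y \<in> set (drop k \<sigma>).
           \<not> rlex_less (length \<sigma>) (lex_label E \<sigma> col k (\<sigma>!k)) (lex_label E \<sigma> col k y)))"

text \<open>Clique, with colors 1..l: q c is the vertex selected for color c; the current set Q
  when color c is processed is q ` {c+1..l}.\<close>
definition clique_run :: "'a set \<Rightarrow> ('a \<Rightarrow> 'a \<Rightarrow> bool) \<Rightarrow> ('a \<Rightarrow> nat) \<Rightarrow> nat \<Rightarrow> (nat \<Rightarrow> 'a) \<Rightarrow> bool" where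
  "clique_run V E col l q \<longleftrightarrow>
     (\<forall>c\<in>{1..l}. q c \<in> V \<and> col (q c) = c \<and>
        (\<forall>y\<in>V. col y = c \<longrightarrow>
           card {u \<in> q ` {c+1..l}. E y u} \<le> card {u \<in> q ` {c+1..l}. E (q c) u}))"

definition clique_first_fail :: "('a \<Rightarrow> 'a \<Rightarrow> bool) \<Rightarrow> nat \<Rightarrow> (nat \<Rightarrow> 'a) \<Rightarrow> nat \<Rightarrow> bool" where
  "clique_first_fail E l q c \<longleftrightarrow> 1 \<le> c \<and> c \<le> l \<and>
     \<not> (\<forall>u \<in> q ` {c+1..l}. E (q c) u) \<and>
     (\<forall>c'. c < c' \<and> c' \<le> l \<longrightarrow> (\<forall>u \<in> q ` {c'+1..l}. E (q c') u))"

text \<open>G*_i, with vertices of type 'a option: Some v for an old vertex, None for w_i.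
  xs is the list x_1,...,x_{n_c} (0-indexed), so x_1..x_i = take i xs.\<close>
definition gstar_rem :: "'a set \<Rightarrow> ('a \<Rightarrow> nat) \<Rightarrow> nat \<Rightarrow> 'a list \<Rightarrow> nat \<Rightarrow> 'a set" where
  "gstar_rem V col c xs i = {v \<in> V. c \<le> col v} - set (take i xs)"

definition gstar_V :: "'a set \<Rightarrow> ('a \<Rightarrow> nat) \<Rightarrow> nat \<Rightarrow> 'a list \<Rightarrow> nat \<Rightarrow> 'a option set" where
  "gstar_V V col c xs i = insert None (Some ` gstar_rem V col c xs i)"

definition gstar_w_adj :: "'a set \<Rightarrow> ('a \<Rightarrow> 'a \<Rightarrow> bool) \<Rightarrow> ('a \<Rightarrow> nat) \<Rightarrow> nat \<Rightarrow> 'a list \<Rightarrow> nat \<Rightarrow> 'a \<Rightarrow> bool" where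
  "gstar_w_adj V E col c xs i v \<longleftrightarrow> v \<in> gstar_rem V col c xs i \<and> (\<exists>x \<in> set (take i xs). E x v)"

definition gstar_E :: "'a set \<Rightarrow> ('a \<Rightarrow> 'a \<Rightarrow> bool) \<Rightarrow> ('a \<Rightarrow> nat) \<Rightarrow> nat \<Rightarrow> 'a list \<Rightarrow> nat
     \<Rightarrow> 'a option \<Rightarrow> 'a option \<Rightarrow> bool" where
  "gstar_E V E col c xs i a b =
     (case (a, b) of
        (Some u, Some v) \<Rightarrow> u \<in> gstar_rem V col c xs i \<and> v \<in> gstar_rem V col c xs i \<and> E u v
      | (None, Some v) \<Rightarrow> gstar_w_adj V E col c xs i v
      | (Some u, None) \<Rightarrow> gstar_w_adj V E col c xs i u
      | (None, None) \<Rightarrow> False)"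

text \<open>A path v_0-...-v_p is a list of p+1 distinct vertices, consecutive ones adjacent.\<close>
definition path_in :: "'b set \<Rightarrow> ('b \<Rightarrow> 'b \<Rightarrow> bool) \<Rightarrow> 'b list \<Rightarrow> bool" where
  "path_in VS ES ps \<longleftrightarrow> ps \<noteq> [] \<and> distinct ps \<and> set ps \<subseteq> VS \<and>
     (\<forall>j. Suc j < length ps \<longrightarrow> ES (ps!j) (ps!Suc j))"

definition chords :: "('b \<Rightarrow> 'b \<Rightarrow> bool) \<Rightarrow> 'b list \<Rightarrow> (nat \<times> nat) set" where
  "chords ES ps = {(j, k). j + 2 \<le> k \<and> k < length ps \<and> ES (ps!j) (ps!k)}"

definition chord_ok :: "('b \<Rightarrow> 'b \<Rightarrow> bool) \<Rightarrow> 'b list \<Rightarrow> nat \<Rightarrow> bool" where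
  "chord_ok ES ps lo \<longleftrightarrow> chords ES ps = {} \<or>
     (\<exists>t. lo < t \<and> t + 2 < length ps \<and> chords ES ps = {(t - 1, t + 1)})"

text \<open>Bad path in G*_{i-1} (for i > 1), ending in x_i = xs!(i-1).\<close>
definition bad_path :: "'a set \<Rightarrow> ('a \<Rightarrow> 'a \<Rightarrow> bool) \<Rightarrow> ('a \<Rightarrow> nat) \<Rightarrow> nat \<Rightarrow> 'a list \<Rightarrow> nat
     \<Rightarrow> 'a option list \<Rightarrow> bool" where
  "bad_path V E col c xs i ps \<longleftrightarrow>
     path_in (gstar_V V col c xs (i - 1)) (gstar_E V E col c xs (i - 1)) ps \<and>
     odd (length ps - 1) \<and> ps!0 = None \<and> last ps = Some (xs!(i - 1)) \<and>
     chord_ok (gstar_E V E col c xs (i - 1)) ps 1"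

definition near_obstruction :: "'a set \<Rightarrow> ('a \<Rightarrow> 'a \<Rightarrow> bool) \<Rightarrow> 'a list \<Rightarrow> 'a \<Rightarrow> bool" where
  "near_obstruction V E ps z \<longleftrightarrow>
     path_in V E ps \<and> 4 \<le> length ps \<and> odd (length ps - 1) \<and> chord_ok E ps 0 \<and>
     z \<in> V \<and> z \<notin> set ps \<and> E z (ps!0) \<and> E z (last ps) \<and>
     ((chords E ps = {(0, 2)} \<and> \<not> E z (ps!1) \<and> \<not> E z (ps!2))
    \<or> (chords E ps = {(1, 3)} \<and> (\<not> E z (ps!1) \<or> \<not> E z (ps!3)))
    \<or> ((0, 2) \<notin> chords E ps \<and> \<not> E z (ps!1))
    \<or> ((0, 2) \<notin> chords E ps \<and> (1, 3) \<notin> chords E ps \<and> E z (ps!1) \<and> \<not> E z (ps!2)))"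

end

theory Submission
  imports Defs
begin

locale lexs =
  fixes V :: "'a set" and E :: "'a \<Rightarrow> 'a \<Rightarrow> bool" and \<sigma> :: "'a list" and col :: "'a \<Rightarrow> nat"
  assumes G: "graph V E" and RUN: "lexcolor_run V E \<sigma> col"
begin

abbreviation "n \<equiv> length \<sigma>"

lemma dist: "distinct \<sigma>" and setV: "set \<sigma> = V"
  using RUN unfolding lexcolor_run_def by auto

lemma symE: "E u w \<Longrightarrow> E w u" using G unfolding graph_def by blast
lemma irrE: "\<not> E u u" using G unfolding graph_def by blast
lemma EV: "E u w \<Longrightarrow> u \<in> V \<and> w \<in> V" using G unfolding graph_def by blast

lemma col_def': "k < n \<Longrightarrow> col (\<sigma>!k) = (LEAST c. 0 < c \<and> (\<forall>j<k. E (\<sigma>!j) (\<sigma>!k) \<longrightarrow> col (\<sigma>!j) \<noteq> c))"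
  using RUN unfolding lexcolor_run_def by blast

lemma lexmax: "k < n \<Longrightarrow> y \<in> set (drop k \<sigma>) \<Longrightarrow>
   \<not> rlex_less n (lex_label E \<sigma> col k (\<sigma>!k)) (lex_label E \<sigma> col k y)"
  using RUN unfolding lexcolor_run_def by blast

lemma ex_free: "\<exists>c. 0 < c \<and> (\<forall>j<k. E (\<sigma>!j) (\<sigma>!k) \<longrightarrow> col (\<sigma>!j) \<noteq> c)"
proof -
  let ?M = "Suc (Max (insert 0 ((\<lambda>j. col (\<sigma>!j)) ` {..<k})))"
  have "\<forall>j<k. col (\<sigma>!j) < ?M"
    by (simp add: le_imp_less_Suc)
  then show ?thesis by (metis less_not_refl zero_less_Suc)
qed

lemma col_prop: assumes "k < n" shows "0 < col (\<sigma>!k) \<and> (\<forall>j<k. E (\<sigma>!j) (\<sigma>!k) \<longrightarrow> col (\<sigma>!j) \<noteq> col (\<sigma>!k))"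
proof -
  have "col (\<sigma>!k) = (LEAST c. 0 < c \<and> (\<forall>j<k. E (\<sigma>!j) (\<sigma>!k) \<longrightarrow> col (\<sigma>!j) \<noteq> c))"
    using col_def'[OF assms] .
  then show ?thesis using LeastI_ex[OF ex_free[of k]] by simp
qed

lemma col_below: assumes "k < n" "0 < c'" "c' < col (\<sigma>!k)" shows "\<exists>j<k. E (\<sigma>!j) (\<sigma>!k) \<and> col (\<sigma>!j) = c'"
proof -
  have "c' < (LEAST c. 0 < c \<and> (\<forall>j<k. E (\<sigma>!j) (\<sigma>!k) \<longrightarrow> col (\<sigma>!j) \<noteq> c))"
    using col_def'[OF assms(1)] assms(3) by simp
  then have "\<not> (0 < c' \<and> (\<forall>j<k. E (\<sigma>!j) (\<sigma>!k) \<longrightarrow> col (\<sigma>!j) \<noteq> c'))"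
    by (rule not_less_Least)
  then show ?thesis using assms(2) by blast
qed

lemma col_le: assumes "k < n" shows "col (\<sigma>!k) \<le> Suc k"
proof (rule ccontr)
  assume "\<not> ?thesis"
  have "{1..Suc k} \<subseteq> (\<lambda>j. col (\<sigma>!j)) ` {..<k}"
  proof
    fix x assume x: "x \<in> {1..Suc k}"
    then have "0 < x" "x < col (\<sigma>!k)" using \<open>\<not> col (\<sigma>!k) \<le> Suc k\<close> by auto
    then obtain j where "j<k" "col (\<sigma>!j) = x" using col_below[OF assms] by blast
    then show "x \<in> (\<lambda>j. col (\<sigma>!j)) ` {..<k}" by force
  qed
  then have "card {1..Suc k} \<le> card ((\<lambda>j. col (\<sigma>!j)) ` {..<k})" by (intro card_mono) auto
  also have "\<dots> \<le> k" using card_image_le[of "{..<k}"] by simp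
  finally show False by simp
qed

lemma vpos: "u \<in> V \<Longrightarrow> \<exists>k<n. \<sigma>!k = u"
  using setV by (metis in_set_conv_nth)

lemma proper: assumes "E u w" shows "col u \<noteq> col w"
proof -
  obtain a b where a: "a < n" "\<sigma>!a = u" and b: "b < n" "\<sigma>!b = w" using EV[OF assms] vpos by blast
  have "a \<noteq> b" using a b assms irrE by blast
  then consider "a < b" | "b < a" by linarith
  then show ?thesis
  proof cases
    case 1 then show ?thesis using col_prop[OF b(1)] a b assms by auto
  next
    case 2 
    have "E (\<sigma>!b) (\<sigma>!a)" using a b symE[OF assms] by simp
    then show ?thesis using col_prop[OF a(1)] 2 a b by metis
  qed
qed

lemma col_pos: assumes "u \<in> V" shows "0 < col u"
proof -
  obtain k where "k < n" "\<sigma>!k = u" using vpos assms by blast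
  then show ?thesis using col_prop[of k] by simp
qed
lemma col_len: assumes "u \<in> V" shows "col u \<le> n"
proof -
  obtain k where "k < n" "\<sigma>!k = u" using vpos assms by blast
  then show ?thesis using col_le[of k] by simp
qed

lemma label_val: assumes "k < n" "\<exists>j<k. E (\<sigma>!j) y \<and> col (\<sigma>!j) = d"
  obtains j where "j < k" "E (\<sigma>!j) y" "col (\<sigma>!j) = d" "lex_label E \<sigma> col k y d = n - Suc j"
    "\<And>j'. j' < j \<Longrightarrow> \<not> (E (\<sigma>!j') y \<and> col (\<sigma>!j') = d)"
proof -
  define P where "P = (\<lambda>j. j < k \<and> E (\<sigma>!j) y \<and> col (\<sigma>!j) = d)"
  have ex: "\<exists>j. P j" using assms(2) unfolding P_def by blast
  define j where "j = (LEAST j. P j)"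
  have Pj: "P j" unfolding j_def by (rule LeastI_ex[OF ex])
  have Q: "\<And>j'. j' < j \<Longrightarrow> \<not> P j'" unfolding j_def by (rule not_less_Least)
  have L: "lex_label E \<sigma> col k y d = n - Suc j"
    unfolding lex_label_def j_def P_def using assms(2) by (simp only: if_True)
  show ?thesis
    apply (rule that[of j])
    using Pj Q L unfolding P_def by auto
qed

lemma label_pos_iff: assumes k: "k < n"
  shows "0 < lex_label E \<sigma> col k y d \<longleftrightarrow> (\<exists>j<k. E (\<sigma>!j) y \<and> col (\<sigma>!j) = d)"
proof (cases "\<exists>j<k. E (\<sigma>!j) y \<and> col (\<sigma>!j) = d")
  case True
  then obtain j where "j < k" "lex_label E \<sigma> col k y d = n - Suc j" using label_val[OF k] by metis
  then show ?thesis using True k by simp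
next
  case False then show ?thesis unfolding lex_label_def by (simp only: if_False) simp
qed

lemma top_diff:
  assumes s: "s < n" and q: "s < q" "q < n" and c: "1 \<le> c"
    and d0: "c \<le> d0" "d0 \<le> n" "lex_label E \<sigma> col s (\<sigma>!s) d0 \<noteq> lex_label E \<sigma> col s (\<sigma>!q) d0"
  shows "\<exists>d. c \<le> d \<and> d \<le> n \<and> lex_label E \<sigma> col s (\<sigma>!q) d < lex_label E \<sigma> col s (\<sigma>!s) d"
proof -
  define Lx where "Lx = lex_label E \<sigma> col s (\<sigma>!s)"
  define Ly where "Ly = lex_label E \<sigma> col s (\<sigma>!q)"
  define D where "D = {d. c \<le> d \<and> d \<le> n \<and> Lx d \<noteq> Ly d}"
  have fin: "finite D" unfolding D_def by simp
  have ne: "d0 \<in> D" using d0 unfolding D_def Lx_def Ly_def by simp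
  define d where "d = Max D"
  have dD: "d \<in> D" unfolding d_def using fin ne Max_in by blast
  have above: "\<And>d'. d < d' \<Longrightarrow> d' \<le> n \<Longrightarrow> Lx d' = Ly d'"
  proof (rule ccontr)
    fix d' assume "d < d'" "d' \<le> n" "Lx d' \<noteq> Ly d'"
    then have "d' \<in> D" using dD unfolding D_def by auto
    then have "d' \<le> d" unfolding d_def using fin by simp
    then show False using \<open>d < d'\<close> by simp
  qed
  have "\<sigma>!q \<in> set (drop s \<sigma>)" using q
    by (metis Cons_nth_drop_Suc drop_drop in_set_dropD le_add_diff_inverse2 less_imp_le_nat list.set_intros(1) order.strict_trans)
  then have nl: "\<not> rlex_less n Lx Ly" using lexmax[OF s] unfolding Lx_def Ly_def by simp
  have "\<not> Lx d < Ly d"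
  proof
    assume "Lx d < Ly d"
    then have "rlex_less n Lx Ly" unfolding rlex_less_def using dD c above unfolding D_def by auto
    then show False using nl by simp
  qed
  then have "Ly d < Lx d" using dD unfolding D_def by auto
  then show ?thesis using dD unfolding D_def Lx_def Ly_def by blast
qed

lemma witness_of_diff:
  assumes s: "s < n" and q: "s < q" "q < n"
    and nox: "\<forall>j<s. E (\<sigma>!j) (\<sigma>!s) \<longrightarrow> col (\<sigma>!j) \<noteq> c"
    and dd: "c \<le> d" "lex_label E \<sigma> col s (\<sigma>!q) d < lex_label E \<sigma> col s (\<sigma>!s) d"
  shows "\<exists>j<s. E (\<sigma>!j) (\<sigma>!s) \<and> c < col (\<sigma>!j) \<and> \<not> E (\<sigma>!j) (\<sigma>!q)"
proof -
  have "0 < lex_label E \<sigma> col s (\<sigma>!s) d" using dd by simp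
  then have ex: "\<exists>j<s. E (\<sigma>!j) (\<sigma>!s) \<and> col (\<sigma>!j) = d" using label_pos_iff[OF s] by blast
  obtain j where j: "j < s" "E (\<sigma>!j) (\<sigma>!s)" "col (\<sigma>!j) = d" "lex_label E \<sigma> col s (\<sigma>!s) d = n - Suc j"
    using label_val[OF s ex] by metis
  have "d \<noteq> c" using nox j by blast
  then have cd: "c < col (\<sigma>!j)" using dd j by simp
  have "\<not> E (\<sigma>!j) (\<sigma>!q)"
  proof
    assume Ejq: "E (\<sigma>!j) (\<sigma>!q)"
    then have ex2: "\<exists>j<s. E (\<sigma>!j) (\<sigma>!q) \<and> col (\<sigma>!j) = d" using j by blast
    obtain j' where j': "j' < s" "lex_label E \<sigma> col s (\<sigma>!q) d = n - Suc j'"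
      "\<And>j''. j'' < j' \<Longrightarrow> \<not> (E (\<sigma>!j'') (\<sigma>!q) \<and> col (\<sigma>!j'') = d)"
      using label_val[OF s ex2] by metis
    have "\<not> j < j'" using j'(3)[of j] Ejq j by blast
    then have "n - Suc j \<le> n - Suc j'" by simp
    then show False using dd j j' by simp
  qed
  then show ?thesis using j cd by blast
qed

lemma lexA:
  assumes s: "s < n" and q: "s < q" "q < n" and c: "1 \<le> c"
    and nox: "\<forall>j<s. E (\<sigma>!j) (\<sigma>!s) \<longrightarrow> col (\<sigma>!j) \<noteq> c"
    and yc: "\<exists>j<s. E (\<sigma>!j) (\<sigma>!q) \<and> col (\<sigma>!j) = c"
    and cn: "c \<le> n"
  shows "\<exists>j<s. E (\<sigma>!j) (\<sigma>!s) \<and> c < col (\<sigma>!j) \<and> \<not> E (\<sigma>!j) (\<sigma>!q)"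
proof -
  have "lex_label E \<sigma> col s (\<sigma>!s) c = 0" using label_pos_iff[OF s, of "\<sigma>!s" c] nox by auto
  moreover have "0 < lex_label E \<sigma> col s (\<sigma>!q) c" using label_pos_iff[OF s] yc by blast
  ultimately obtain d where "c \<le> d" "d \<le> n" "lex_label E \<sigma> col s (\<sigma>!q) d < lex_label E \<sigma> col s (\<sigma>!s) d"
    using top_diff[OF s q c order.refl cn] by (metis less_irrefl)
  then show ?thesis using witness_of_diff[OF s q nox] by blast
qed

lemma lexB:
  assumes s: "s < n" and q: "s < q" "q < n" and c: "1 \<le> c"
    and nox: "\<forall>j<s. E (\<sigma>!j) (\<sigma>!s) \<longrightarrow> col (\<sigma>!j) \<noteq> c"
    and u: "ju < s" "E (\<sigma>!ju) (\<sigma>!q)" "c < col (\<sigma>!ju)" "\<not> E (\<sigma>!ju) (\<sigma>!s)"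
  shows "\<exists>j<s. E (\<sigma>!j) (\<sigma>!s) \<and> c < col (\<sigma>!j) \<and> (\<not> E (\<sigma>!j) (\<sigma>!q) \<or> \<not> E (\<sigma>!j) (\<sigma>!ju))"
proof (cases "\<exists>d0. c \<le> d0 \<and> d0 \<le> n \<and> lex_label E \<sigma> col s (\<sigma>!s) d0 \<noteq> lex_label E \<sigma> col s (\<sigma>!q) d0")
  case True
  then obtain d0 where "c \<le> d0" "d0 \<le> n" "lex_label E \<sigma> col s (\<sigma>!s) d0 \<noteq> lex_label E \<sigma> col s (\<sigma>!q) d0" by blast
  then obtain d where "c \<le> d" "lex_label E \<sigma> col s (\<sigma>!q) d < lex_label E \<sigma> col s (\<sigma>!s) d"
    using top_diff[OF s q c] by blast
  then show ?thesis using witness_of_diff[OF s q nox] by blast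
next
  case False
  let ?d = "col (\<sigma>!ju)"
  have un: "ju < n" using u s by simp
  have dn: "?d \<le> n" using col_len[of "\<sigma>!ju"] un setV by (metis nth_mem)
  have eq: "lex_label E \<sigma> col s (\<sigma>!s) ?d = lex_label E \<sigma> col s (\<sigma>!q) ?d"
    using False u dn by auto
  have exq: "\<exists>j<s. E (\<sigma>!j) (\<sigma>!q) \<and> col (\<sigma>!j) = ?d" using u by blast
  obtain j' where j': "j' < s" "lex_label E \<sigma> col s (\<sigma>!q) ?d = n - Suc j'"
      "\<And>j''. j'' < j' \<Longrightarrow> \<not> (E (\<sigma>!j'') (\<sigma>!q) \<and> col (\<sigma>!j'') = ?d)"
    using label_val[OF s exq] by metis
  have "0 < lex_label E \<sigma> col s (\<sigma>!q) ?d" using label_pos_iff[OF s] exq by blast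
  then have exs: "\<exists>j<s. E (\<sigma>!j) (\<sigma>!s) \<and> col (\<sigma>!j) = ?d" using eq label_pos_iff[OF s] by metis
  obtain j where j: "j < s" "E (\<sigma>!j) (\<sigma>!s)" "col (\<sigma>!j) = ?d" "lex_label E \<sigma> col s (\<sigma>!s) ?d = n - Suc j"
    using label_val[OF s exs] by metis
  have "j = j'" using j j' eq s by simp
  have "\<not> ju < j'" using j'(3)[of ju] u by blast
  moreover have "j \<noteq> ju" using j u by blast
  ultimately have "j < ju" using \<open>j = j'\<close> by simp
  have "\<not> E (\<sigma>!j) (\<sigma>!ju)" using proper j(3) by blast
  then show ?thesis using j u by auto
qed

end

definition good_core :: "('b \<Rightarrow> 'b \<Rightarrow> bool) \<Rightarrow> 'b list \<Rightarrow> bool" where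
  "good_core ES C \<longleftrightarrow> chords ES C = {} \<or> (\<exists>t. 0 < t \<and> t + 2 \<le> length C \<and> chords ES C = {(t - 1, t + 1)})"

lemma chords_map: "chords ES (map f [0..<N]) = {(j,k). j + 2 \<le> k \<and> k < N \<and> ES (f j) (f k)}"
  unfolding chords_def by auto

lemma ex_max_below: fixes m :: nat assumes "P a" "a < m" shows "\<exists>b. P b \<and> b < m \<and> (\<forall>x. P x \<longrightarrow> x < m \<longrightarrow> x \<le> b)"
proof -
  let ?S = "{x. P x \<and> x < m}"
  have f: "finite ?S" by (rule finite_subset[of _ "{..<m}"]) auto
  have ne: "a \<in> ?S" using assms by simp
  have "Max ?S \<in> ?S" using f ne Max_in by blast
  moreover have "\<forall>x. P x \<longrightarrow> x < m \<longrightarrow> x \<le> Max ?S" using f by simp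
  ultimately show ?thesis by blast
qed

locale hubctx =
  fixes V :: "'a set" and E :: "'a \<Rightarrow> 'a \<Rightarrow> bool" and v :: "nat \<Rightarrow> 'a" and L :: nat
    and hc :: bool and tc :: nat and z :: 'a
  assumes symE: "\<And>a b. E a b \<Longrightarrow> E b a"
    and Lev: "even L" and L2: "2 \<le> L"
    and vinj: "inj_on v {..L}"
    and vV: "\<And>a. a \<le> L \<Longrightarrow> v a \<in> V"
    and zV: "z \<in> V"
    and znot: "\<And>a. a \<le> L \<Longrightarrow> z \<noteq> v a"
    and tcb: "hc \<Longrightarrow> 1 \<le> tc \<and> tc + 2 \<le> L"
    and adj: "\<And>a b. a \<le> L \<Longrightarrow> b \<le> L \<Longrightarrow> E (v a) (v b) \<longleftrightarrow>
        (a = Suc b \<or> b = Suc a \<or> (hc \<and> ((Suc a = tc \<and> b = Suc tc) \<or> (Suc b = tc \<and> a = Suc tc))))"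
    and zL: "E z (v L)"
begin

definition A :: "nat \<Rightarrow> nat \<Rightarrow> bool" where
  "A a b \<longleftrightarrow> (a = Suc b \<or> b = Suc a \<or> (hc \<and> ((Suc a = tc \<and> b = Suc tc) \<or> (Suc b = tc \<and> a = Suc tc))))"

definition H :: "nat \<Rightarrow> bool" where "H a \<longleftrightarrow> E z (v a)"

lemma adjA: "a \<le> L \<Longrightarrow> b \<le> L \<Longrightarrow> E (v a) (v b) \<longleftrightarrow> A a b"
  using adj unfolding A_def by blast

definition corep :: "'a list \<Rightarrow> bool" where
  "corep C \<longleftrightarrow> C \<noteq> [] \<and> distinct C \<and> (\<forall>j. Suc j < length C \<longrightarrow> E (C!j) (C!Suc j)) \<and>
     C!0 = v 0 \<and> last C = z \<and> set C \<subseteq> v ` {..L} \<union> {z} \<and> even (length C) \<and> good_core E C"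

lemma near_build:
  assumes N: "4 \<le> N" "even N" and ginj: "inj_on g {..<N}" and gL: "\<And>j. j < N \<Longrightarrow> g j \<le> L"
    and cons: "\<And>j. Suc j < N \<Longrightarrow> A (g j) (g (Suc j))"
    and h0: "H (g 0)" and hN: "H (g (N - 1))"
    and ok: "{(j,k). j + 2 \<le> k \<and> k < N \<and> A (g j) (g k)} = {} \<or>
          (\<exists>t. 0 < t \<and> t + 2 < N \<and> {(j,k). j + 2 \<le> k \<and> k < N \<and> A (g j) (g k)} = {(t - 1, t + 1)})"
    and ty: "({(j,k). j + 2 \<le> k \<and> k < N \<and> A (g j) (g k)} = {(0,2)} \<and> \<not> H (g 1) \<and> \<not> H (g 2))
      \<or> ({(j,k). j + 2 \<le> k \<and> k < N \<and> A (g j) (g k)} = {(1,3)} \<and> (\<not> H (g 1) \<or> \<not> H (g 3)))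
      \<or> ((0,2) \<notin> {(j,k). j + 2 \<le> k \<and> k < N \<and> A (g j) (g k)} \<and> \<not> H (g 1))
      \<or> ((0,2) \<notin> {(j,k). j + 2 \<le> k \<and> k < N \<and> A (g j) (g k)} \<and> (1,3) \<notin> {(j,k). j + 2 \<le> k \<and> k < N \<and> A (g j) (g k)} \<and> H (g 1) \<and> \<not> H (g 2))"
  shows "\<exists>ps z'. near_obstruction V E ps z'"
proof -
  define f where "f = (\<lambda>j. v (g j))"
  define ps where "ps = map f [0..<N]"
  have CH: "chords E ps = {(j,k). j + 2 \<le> k \<and> k < N \<and> A (g j) (g k)}"
    unfolding ps_def chords_map f_def using adjA gL by auto
  have len: "length ps = N" unfolding ps_def by simp
  have nth: "\<And>j. j < N \<Longrightarrow> ps ! j = v (g j)" unfolding ps_def f_def by simp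
  have finj: "inj_on f {..<N}"
  proof (rule inj_onI)
    fix x y assume "x \<in> {..<N}" "y \<in> {..<N}" "f x = f y"
    then have "g x = g y" using vinj gL unfolding f_def inj_on_def by auto
    then show "x = y" using ginj \<open>x \<in> {..<N}\<close> \<open>y \<in> {..<N}\<close> unfolding inj_on_def by blast
  qed
  have dist: "distinct ps" unfolding ps_def using finj by (simp add: distinct_map atLeast0LessThan)
  have setps: "set ps = f ` {..<N}" unfolding ps_def by auto
  have ne: "ps \<noteq> []" using len N by auto
  have sub: "set ps \<subseteq> V" using setps gL vV unfolding f_def by auto
  have cons': "\<forall>j. Suc j < length ps \<longrightarrow> E (ps ! j) (ps ! Suc j)"
  proof (intro allI impI)
    fix j assume "Suc j < length ps"
    then have "Suc j < N" using len by simp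
    then show "E (ps ! j) (ps ! Suc j)" using nth cons adjA gL by simp
  qed
  have path: "path_in V E ps"
    unfolding path_in_def using ne dist sub cons' by blast
  have "last ps = ps ! (N - 1)" using ne len by (simp add: last_conv_nth)
  then have lastps: "last ps = v (g (N - 1))" using N nth by simp
  have zn: "z \<notin> set ps" using znot gL setps unfolding f_def by auto
  have n1: "ps ! 1 = v (g 1)" "ps ! 2 = v (g 2)" "ps ! 3 = v (g 3)" "ps ! 0 = v (g 0)" using nth N by auto
  show ?thesis
    unfolding near_obstruction_def
    apply (rule exI[of _ ps], rule exI[of _ z])
    using path N len ok CH zV zn h0 hN lastps n1 ty unfolding chord_ok_def H_def by auto
qed

lemma core_build:
  assumes M: "odd M" and g0: "g 0 = 0" and ginj: "inj_on g {..<M}" and gL: "\<And>j. j < M \<Longrightarrow> g j \<le> L"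
    and cons: "\<And>j. Suc j < M \<Longrightarrow> A (g j) (g (Suc j))"
    and hM: "H (g (M - 1))"
    and ok: "{(j,k). j + 2 \<le> k \<and> k < M \<and> A (g j) (g k)} \<union> {(j,k). k = M \<and> j + 2 \<le> M \<and> H (g j)} = {} \<or>
          (\<exists>t. 0 < t \<and> t + 1 \<le> M \<and> {(j,k). j + 2 \<le> k \<and> k < M \<and> A (g j) (g k)} \<union> {(j,k). k = M \<and> j + 2 \<le> M \<and> H (g j)} = {(t - 1, t + 1)})"
  shows "\<exists>C. corep C"
proof -
  define f where "f = (\<lambda>j. if j < M then v (g j) else z)"
  define C where "C = map f [0..<Suc M]"
  have len: "length C = Suc M" unfolding C_def by simp
  have nth: "\<And>j. j < Suc M \<Longrightarrow> C ! j = f j" unfolding C_def by (simp del: upt_Suc)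
  have key: "\<And>j k. j + 2 \<le> k \<Longrightarrow> k < Suc M \<Longrightarrow> E (f j) (f k) \<longleftrightarrow> ((k < M \<and> A (g j) (g k)) \<or> (k = M \<and> H (g j)))"
  proof -
    fix j k assume jk: "j + 2 \<le> k" "k < Suc M"
    show "E (f j) (f k) \<longleftrightarrow> ((k < M \<and> A (g j) (g k)) \<or> (k = M \<and> H (g j)))"
    proof (cases "k < M")
      case True then show ?thesis using jk adjA gL unfolding f_def by simp
    next
      case False then have "k = M" using jk by simp
      then show ?thesis using jk symE unfolding f_def H_def by auto
    qed
  qed
  have CH: "chords E C = {(j,k). j + 2 \<le> k \<and> k < M \<and> A (g j) (g k)} \<union> {(j,k). k = M \<and> j + 2 \<le> M \<and> H (g j)}"
    unfolding C_def chords_map using key by fastforce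
  have finj: "inj_on f {..<Suc M}"
  proof (rule inj_onI)
    fix x y assume x: "x \<in> {..<Suc M}" and y: "y \<in> {..<Suc M}" and e: "f x = f y"
    show "x = y"
    proof (cases "x < M \<and> y < M")
      case True
      then have "g x = g y" using vinj gL e unfolding f_def inj_on_def by auto
      then show ?thesis using ginj True unfolding inj_on_def by blast
    next
      case False
      then show ?thesis using x y e znot gL unfolding f_def by (auto split: if_splits)
    qed
  qed
  have dist: "distinct C" unfolding C_def distinct_map using finj by (simp only: set_upt atLeast0LessThan distinct_upt)
  have setC: "set C = f ` {..<Suc M}" unfolding C_def by (simp only: set_map set_upt atLeast0LessThan)
  have consC: "\<forall>j. Suc j < length C \<longrightarrow> E (C!j) (C!Suc j)"
  proof (intro allI impI)
    fix j assume "Suc j < length C"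
    then have j: "Suc j \<le> M" using len by simp
    show "E (C!j) (C!Suc j)"
    proof (cases "Suc j = M")
      case True then show ?thesis using nth len hM symE j unfolding f_def H_def by auto
    next
      case False then show ?thesis using nth len j cons adjA gL unfolding f_def by auto
    qed
  qed
  have M1: "0 < M" using M by (cases M) auto
  have "C \<noteq> []" using len by auto
  then have "last C = C ! M" using len by (simp add: last_conv_nth)
  then have last: "last C = z" using nth unfolding f_def by simp
  have c0: "C ! 0 = v 0" using nth M1 g0 unfolding f_def by simp
  have sub: "set C \<subseteq> v ` {..L} \<union> {z}" using setC gL unfolding f_def by auto
  have gc: "good_core E C" unfolding good_core_def CH len using ok by auto
  have "corep C" unfolding corep_def using dist consC last c0 sub gc len M \<open>C \<noteq> []\<close> by simp
  then show ?thesis by blast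
qed

lemma Hsym: "E (v a) z \<longleftrightarrow> H a" unfolding H_def using symE by blast

lemma hub_case_i:
  assumes a0: "a0 \<le> L" "H a0" "even a0" and none: "\<And>a. a < a0 \<Longrightarrow> \<not> H a"
  shows "\<exists>C. corep C"
proof (rule core_build[of "Suc a0" "\<lambda>j. j"])
  show "odd (Suc a0)" using a0 by simp
  show "inj_on (\<lambda>j. j) {..<Suc a0}" by simp
  show "\<And>j. j < Suc a0 \<Longrightarrow> j \<le> L" using a0 by simp
  show "\<And>j. Suc j < Suc a0 \<Longrightarrow> A j (Suc j)" unfolding A_def by simp
  show "H (Suc a0 - 1)" using a0 by simp
  have S2: "{(j,k). k = Suc a0 \<and> j + 2 \<le> Suc a0 \<and> H j} = {}" using none by auto
  show "{(j,k). j + 2 \<le> k \<and> k < Suc a0 \<and> A j k} \<union> {(j,k). k = Suc a0 \<and> j + 2 \<le> Suc a0 \<and> H j} = {} \<or>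
    (\<exists>t. 0 < t \<and> t + 1 \<le> Suc a0 \<and> {(j,k). j + 2 \<le> k \<and> k < Suc a0 \<and> A j k} \<union> {(j,k). k = Suc a0 \<and> j + 2 \<le> Suc a0 \<and> H j} = {(t - 1, t + 1)})"
  proof (cases "hc \<and> tc < a0")
    case True
    have "{(j,k). j + 2 \<le> k \<and> k < Suc a0 \<and> A j k} = {(tc - 1, tc + 1)}"
      using True tcb unfolding A_def by auto
    then show ?thesis using S2 True tcb by auto
  next
    case False
    have "{(j,k). j + 2 \<le> k \<and> k < Suc a0 \<and> A j k} = {}"
      using False tcb unfolding A_def by auto
    then show ?thesis using S2 by auto
  qed
qed simp

lemma hub_case_gap3:
  assumes a0: "a0 \<le> L" "H a0" "even a0" and b: "H b" "b + 3 \<le> a0" and none: "\<And>a. b < a \<Longrightarrow> a < a0 \<Longrightarrow> \<not> H a"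
    and oddb: "odd b"
  shows "\<exists>ps z'. near_obstruction V E ps z'"
proof (cases "hc \<and> b < tc \<and> Suc tc = a0")
  case True
  let ?N = "Suc (a0 - b)"
  show ?thesis
  proof (rule near_build[of ?N "\<lambda>j. a0 - j"])
    show "4 \<le> ?N" using b by simp
    show "even ?N" using a0 oddb b by simp
    show "inj_on (\<lambda>j. a0 - j) {..<?N}" by (rule inj_onI) auto
    show "\<And>j. j < ?N \<Longrightarrow> a0 - j \<le> L" using a0 by simp
    show "\<And>j. Suc j < ?N \<Longrightarrow> A (a0 - j) (a0 - Suc j)" unfolding A_def by auto
    show "H (a0 - 0)" using a0 by simp
    show "H (a0 - (?N - 1))" using b by (simp add: Nat.diff_diff_right)
    have CH: "{(j,k). j + 2 \<le> k \<and> k < ?N \<and> A (a0 - j) (a0 - k)} = {(0,2)}"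
      using True b unfolding A_def by auto
    show "{(j,k). j + 2 \<le> k \<and> k < ?N \<and> A (a0 - j) (a0 - k)} = {} \<or>
      (\<exists>t. 0 < t \<and> t + 2 < ?N \<and> {(j,k). j + 2 \<le> k \<and> k < ?N \<and> A (a0 - j) (a0 - k)} = {(t - 1, t + 1)})"
      using CH b by (intro disjI2 exI[of _ 1]) auto
    have "\<not> H (a0 - 1)" "\<not> H (a0 - 2)" using none b by auto
    then show "({(j,k). j + 2 \<le> k \<and> k < ?N \<and> A (a0 - j) (a0 - k)} = {(0,2)} \<and> \<not> H (a0 - 1) \<and> \<not> H (a0 - 2))
      \<or> ({(j,k). j + 2 \<le> k \<and> k < ?N \<and> A (a0 - j) (a0 - k)} = {(1,3)} \<and> (\<not> H (a0 - 1) \<or> \<not> H (a0 - 3)))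
      \<or> ((0,2) \<notin> {(j,k). j + 2 \<le> k \<and> k < ?N \<and> A (a0 - j) (a0 - k)} \<and> \<not> H (a0 - 1))
      \<or> ((0,2) \<notin> {(j,k). j + 2 \<le> k \<and> k < ?N \<and> A (a0 - j) (a0 - k)} \<and> (1,3) \<notin> {(j,k). j + 2 \<le> k \<and> k < ?N \<and> A (a0 - j) (a0 - k)} \<and> H (a0 - 1) \<and> \<not> H (a0 - 2))"
      using CH by simp
  qed
next
  case False
  let ?N = "Suc (a0 - b)"
  show ?thesis
  proof (rule near_build[of ?N "\<lambda>j. b + j"])
    show "4 \<le> ?N" using b by simp
    show "even ?N" using a0 oddb b by simp
    show "inj_on (\<lambda>j. b + j) {..<?N}" by (rule inj_onI) auto
    show "\<And>j. j < ?N \<Longrightarrow> b + j \<le> L" using a0 b by simp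
    show "\<And>j. Suc j < ?N \<Longrightarrow> A (b + j) (b + Suc j)" unfolding A_def by auto
    show "H (b + 0)" using b by simp
    show "H (b + (?N - 1))" using a0 b by simp
    have nh: "\<not> H (b + 1)" "\<not> H (b + 2)" using none b by auto
    show "{(j,k). j + 2 \<le> k \<and> k < ?N \<and> A (b + j) (b + k)} = {} \<or>
      (\<exists>t. 0 < t \<and> t + 2 < ?N \<and> {(j,k). j + 2 \<le> k \<and> k < ?N \<and> A (b + j) (b + k)} = {(t - 1, t + 1)})"
    proof (cases "hc \<and> b < tc \<and> tc < a0")
      case True
      have "{(j,k). j + 2 \<le> k \<and> k < ?N \<and> A (b + j) (b + k)} = {(tc - b - 1, tc - b + 1)}"
        using True False b unfolding A_def by auto
      then show ?thesis using True False b by (intro disjI2 exI[of _ "tc - b"]) auto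
    next
      case F2: False
      have "{(j,k). j + 2 \<le> k \<and> k < ?N \<and> A (b + j) (b + k)} = {}"
        using F2 b unfolding A_def by auto
      then show ?thesis by simp
    qed
    show "({(j,k). j + 2 \<le> k \<and> k < ?N \<and> A (b + j) (b + k)} = {(0,2)} \<and> \<not> H (b + 1) \<and> \<not> H (b + 2))
      \<or> ({(j,k). j + 2 \<le> k \<and> k < ?N \<and> A (b + j) (b + k)} = {(1,3)} \<and> (\<not> H (b + 1) \<or> \<not> H (b + 3)))
      \<or> ((0,2) \<notin> {(j,k). j + 2 \<le> k \<and> k < ?N \<and> A (b + j) (b + k)} \<and> \<not> H (b + 1))
      \<or> ((0,2) \<notin> {(j,k). j + 2 \<le> k \<and> k < ?N \<and> A (b + j) (b + k)} \<and> (1,3) \<notin> {(j,k). j + 2 \<le> k \<and> k < ?N \<and> A (b + j) (b + k)} \<and> H (b + 1) \<and> \<not> H (b + 2))"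
    proof (cases "hc \<and> tc = Suc b")
      case True
      have "{(j,k). j + 2 \<le> k \<and> k < ?N \<and> A (b + j) (b + k)} = {(0,2)}"
        using True b unfolding A_def by auto
      then show ?thesis using nh by simp
    next
      case F3: False
      have "(0,2) \<notin> {(j,k). j + 2 \<le> k \<and> k < ?N \<and> A (b + j) (b + k)}"
        using F3 b unfolding A_def by auto
      then show ?thesis using nh by simp
    qed
  qed
qed

lemma near_T4_tail:
  assumes hcb: "hc" "tc = b" and b: "H b" "H (Suc b)" "\<not> H (b + 2)" "odd b"
  shows "\<exists>ps z'. near_obstruction V E ps z'"
proof -
  have "b + 2 \<le> L" using tcb hcb by simp
  moreover have "b + 2 \<noteq> L" using b zL unfolding H_def by auto
  ultimately have bL: "b + 3 \<le> L" by simp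
  let ?N = "Suc (L - b)"
  show ?thesis
  proof (rule near_build[of ?N "\<lambda>j. b + j"])
    show "4 \<le> ?N" using bL by simp
    show "even ?N" using Lev b bL by simp
    show "inj_on (\<lambda>j. b + j) {..<?N}" by (rule inj_onI) auto
    show "\<And>j. j < ?N \<Longrightarrow> b + j \<le> L" using bL by simp
    show "\<And>j. Suc j < ?N \<Longrightarrow> A (b + j) (b + Suc j)" unfolding A_def by auto
    show "H (b + 0)" using b by simp
    show "H (b + (?N - 1))" using bL zL unfolding H_def by simp
    have CH: "{(j,k). j + 2 \<le> k \<and> k < ?N \<and> A (b + j) (b + k)} = {}" using hcb unfolding A_def by auto
    show "{(j,k). j + 2 \<le> k \<and> k < ?N \<and> A (b + j) (b + k)} = {} \<or>
      (\<exists>t. 0 < t \<and> t + 2 < ?N \<and> {(j,k). j + 2 \<le> k \<and> k < ?N \<and> A (b + j) (b + k)} = {(t - 1, t + 1)})" using CH by simp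
    show "({(j,k). j + 2 \<le> k \<and> k < ?N \<and> A (b + j) (b + k)} = {(0,2)} \<and> \<not> H (b + 1) \<and> \<not> H (b + 2))
      \<or> ({(j,k). j + 2 \<le> k \<and> k < ?N \<and> A (b + j) (b + k)} = {(1,3)} \<and> (\<not> H (b + 1) \<or> \<not> H (b + 3)))
      \<or> ((0,2) \<notin> {(j,k). j + 2 \<le> k \<and> k < ?N \<and> A (b + j) (b + k)} \<and> \<not> H (b + 1))
      \<or> ((0,2) \<notin> {(j,k). j + 2 \<le> k \<and> k < ?N \<and> A (b + j) (b + k)} \<and> (1,3) \<notin> {(j,k). j + 2 \<le> k \<and> k < ?N \<and> A (b + j) (b + k)} \<and> H (b + 1) \<and> \<not> H (b + 2))" unfolding CH using b by simp
  qed
qed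

end

context hubctx begin
lemma core_gap1_a:
  assumes F: "a0 = Suc b" "a0 \<le> L" "H b" "H a0" "\<And>a. a < b \<Longrightarrow> \<not> H a" "\<not> (hc \<and> tc \<le> b)" "odd b"
  shows "\<exists>C. corep C"
proof -
  let ?M = "Suc a0"
  show ?thesis
  proof (rule core_build[of ?M "\<lambda>j. j"])
    show "odd ?M" using F by simp
    show "0 = 0" using F by simp
    show "inj_on (\<lambda>j. j) {..<?M}" by (rule inj_onI) (use F in \<open>auto split: if_splits\<close>)
    show "\<And>j. j < ?M \<Longrightarrow> j \<le> L" using F by auto
    show "\<And>j. Suc j < ?M \<Longrightarrow> A (j) ((Suc j))" using F unfolding A_def by auto
    show "H ((?M - 1))" using F by simp
    have CH: "{(j,k). j + 2 \<le> k \<and> k < ?M \<and> A (j) (k)} \<union> {(j,k). k = ?M \<and> j + 2 \<le> ?M \<and> H (j)} = {(b, b + 2)}" using F unfolding A_def by auto (metis F(5) le_neq_implies_less)+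
    show "{(j,k). j + 2 \<le> k \<and> k < ?M \<and> A (j) (k)} \<union> {(j,k). k = ?M \<and> j + 2 \<le> ?M \<and> H (j)} = {} \<or>
    (\<exists>t. 0 < t \<and> t + 1 \<le> ?M \<and> {(j,k). j + 2 \<le> k \<and> k < ?M \<and> A (j) (k)} \<union> {(j,k). k = ?M \<and> j + 2 \<le> ?M \<and> H (j)} = {(t - 1, t + 1)})" using CH F by (intro disjI2 exI[of _ "Suc b"]) auto
  qed
qed

lemma core_gap1_b:
  assumes F: "a0 = Suc b" "a0 \<le> L" "H b" "H a0" "\<And>a. a < b \<Longrightarrow> \<not> H a" "hc" "tc < b" "odd b" "1 \<le> tc"
  shows "\<exists>C. corep C"
proof -
  let ?M = "b"
  show ?thesis
  proof (rule core_build[of ?M "\<lambda>j. if j < tc then j else Suc j"])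
    show "odd ?M" using F by simp
    show "(if 0 < tc then 0 else Suc 0) = 0" using F by simp
    show "inj_on (\<lambda>j. if j < tc then j else Suc j) {..<?M}" by (rule inj_onI) (use F in \<open>auto split: if_splits\<close>)
    show "\<And>j. j < ?M \<Longrightarrow> (if j < tc then j else Suc j) \<le> L" using F by auto
    show "\<And>j. Suc j < ?M \<Longrightarrow> A ((if j < tc then j else Suc j)) ((if (Suc j) < tc then (Suc j) else Suc (Suc j)))" using F unfolding A_def by auto
    show "H ((if (?M - 1) < tc then (?M - 1) else Suc (?M - 1)))" using F by simp
    have CH: "{(j,k). j + 2 \<le> k \<and> k < ?M \<and> A ((if j < tc then j else Suc j)) ((if k < tc then k else Suc k))} \<union> {(j,k). k = ?M \<and> j + 2 \<le> ?M \<and> H ((if j < tc then j else Suc j))} = {}" using F unfolding A_def by auto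
    show "{(j,k). j + 2 \<le> k \<and> k < ?M \<and> A ((if j < tc then j else Suc j)) ((if k < tc then k else Suc k))} \<union> {(j,k). k = ?M \<and> j + 2 \<le> ?M \<and> H ((if j < tc then j else Suc j))} = {} \<or>
    (\<exists>t. 0 < t \<and> t + 1 \<le> ?M \<and> {(j,k). j + 2 \<le> k \<and> k < ?M \<and> A ((if j < tc then j else Suc j)) ((if k < tc then k else Suc k))} \<union> {(j,k). k = ?M \<and> j + 2 \<le> ?M \<and> H ((if j < tc then j else Suc j))} = {(t - 1, t + 1)})" using CH by simp
  qed
qed

lemma core_gap1_c:
  assumes F: "a0 = Suc b" "a0 \<le> L" "H b" "H a0" "\<And>a. a < b \<Longrightarrow> \<not> H a" "hc" "tc = b" "odd b" "H (b + 2)" "b + 2 \<le> L"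
  shows "\<exists>C. corep C"
proof -
  let ?M = "b + 2"
  show ?thesis
  proof (rule core_build[of ?M "\<lambda>j. if j < b then j else Suc j"])
    show "odd ?M" using F odd_pos by simp
    show "(if 0 < b then 0 else Suc 0) = 0" using F odd_pos by simp
    show "inj_on (\<lambda>j. if j < b then j else Suc j) {..<?M}" by (rule inj_onI) (use F odd_pos in \<open>auto split: if_splits\<close>)
    show "\<And>j. j < ?M \<Longrightarrow> (if j < b then j else Suc j) \<le> L" using F odd_pos by auto
    show "\<And>j. Suc j < ?M \<Longrightarrow> A ((if j < b then j else Suc j)) ((if (Suc j) < b then (Suc j) else Suc (Suc j)))" using F odd_pos unfolding A_def by auto
    show "H ((if (?M - 1) < b then (?M - 1) else Suc (?M - 1)))" using F odd_pos by simp
    have CH: "{(j,k). j + 2 \<le> k \<and> k < ?M \<and> A ((if j < b then j else Suc j)) ((if k < b then k else Suc k))} \<union> {(j,k). k = ?M \<and> j + 2 \<le> ?M \<and> H ((if j < b then j else Suc j))} = {(b, b + 2)}" using F unfolding A_def by (auto simp: le_less split: if_splits)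
    show "{(j,k). j + 2 \<le> k \<and> k < ?M \<and> A ((if j < b then j else Suc j)) ((if k < b then k else Suc k))} \<union> {(j,k). k = ?M \<and> j + 2 \<le> ?M \<and> H ((if j < b then j else Suc j))} = {} \<or>
    (\<exists>t. 0 < t \<and> t + 1 \<le> ?M \<and> {(j,k). j + 2 \<le> k \<and> k < ?M \<and> A ((if j < b then j else Suc j)) ((if k < b then k else Suc k))} \<union> {(j,k). k = ?M \<and> j + 2 \<le> ?M \<and> H ((if j < b then j else Suc j))} = {(t - 1, t + 1)})" using CH F odd_pos by (intro disjI2 exI[of _ "Suc b"]) auto
  qed
qed

lemma near_rev_a1:
  assumes F: "a0 = Suc b" "a0 \<le> L" "H b" "H a0" "H c" "c + 2 \<le> b" "\<And>a. c < a \<Longrightarrow> a < b \<Longrightarrow> \<not> H a" "odd b" "odd c" "\<not> (hc \<and> c < tc \<and> tc \<le> b)"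
  shows "\<exists>ps z'. near_obstruction V E ps z'"
proof -
  let ?N = "Suc (a0 - c)"
  show ?thesis
  proof (rule near_build[of ?N "\<lambda>j. a0 - j"])
    show "4 \<le> ?N" using F by simp
    show "even ?N" using F by simp
    show "inj_on (\<lambda>j. a0 - j) {..<?N}" by (rule inj_onI) (use F in \<open>auto split: if_splits\<close>)
    show "\<And>j. j < ?N \<Longrightarrow> a0 - j \<le> L" using F by auto
    show "\<And>j. Suc j < ?N \<Longrightarrow> A (a0 - j) (a0 - (Suc j))" using F unfolding A_def by auto
    show "H (a0 - (0::nat))" using F by simp
    show "H (a0 - (?N - 1))" using F by simp
    have CH: "{(j,k). j + 2 \<le> k \<and> k < ?N \<and> A (a0 - j) (a0 - k)} = {}" using F(1,6,10) unfolding A_def by auto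
    show "{(j,k). j + 2 \<le> k \<and> k < ?N \<and> A (a0 - j) (a0 - k)} = {} \<or>
      (\<exists>t. 0 < t \<and> t + 2 < ?N \<and> {(j,k). j + 2 \<le> k \<and> k < ?N \<and> A (a0 - j) (a0 - k)} = {(t - 1, t + 1)})" using CH by simp
    show "({(j,k). j + 2 \<le> k \<and> k < ?N \<and> A (a0 - j) (a0 - k)} = {(0,2)} \<and> \<not> H (a0 - (1::nat)) \<and> \<not> H (a0 - (2::nat)))
      \<or> ({(j,k). j + 2 \<le> k \<and> k < ?N \<and> A (a0 - j) (a0 - k)} = {(1,3)} \<and> (\<not> H (a0 - (1::nat)) \<or> \<not> H (a0 - (3::nat))))
      \<or> ((0,2) \<notin> {(j,k). j + 2 \<le> k \<and> k < ?N \<and> A (a0 - j) (a0 - k)} \<and> \<not> H (a0 - (1::nat)))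
      \<or> ((0,2) \<notin> {(j,k). j + 2 \<le> k \<and> k < ?N \<and> A (a0 - j) (a0 - k)} \<and> (1,3) \<notin> {(j,k). j + 2 \<le> k \<and> k < ?N \<and> A (a0 - j) (a0 - k)} \<and> H (a0 - (1::nat)) \<and> \<not> H (a0 - (2::nat)))" unfolding CH using F by simp
  qed
qed

lemma near_rev_a2:
  assumes F: "a0 = Suc b" "a0 \<le> L" "H b" "H a0" "H c" "c + 2 \<le> b" "\<And>a. c < a \<Longrightarrow> a < b \<Longrightarrow> \<not> H a" "odd b" "odd c" "hc" "c + 1 < tc" "tc + 1 < b"
  shows "\<exists>ps z'. near_obstruction V E ps z'"
proof -
  let ?N = "Suc (a0 - c)"
  show ?thesis
  proof (rule near_build[of ?N "\<lambda>j. a0 - j"])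
    show "4 \<le> ?N" using F by simp
    show "even ?N" using F by simp
    show "inj_on (\<lambda>j. a0 - j) {..<?N}" by (rule inj_onI) (use F in \<open>auto split: if_splits\<close>)
    show "\<And>j. j < ?N \<Longrightarrow> a0 - j \<le> L" using F by auto
    show "\<And>j. Suc j < ?N \<Longrightarrow> A (a0 - j) (a0 - (Suc j))" using F unfolding A_def by auto
    show "H (a0 - (0::nat))" using F by simp
    show "H (a0 - (?N - 1))" using F by simp
    have CH: "{(j,k). j + 2 \<le> k \<and> k < ?N \<and> A (a0 - j) (a0 - k)} = {(a0 - tc - 1, a0 - tc + 1)}" using F(1,6,10,11,12) unfolding A_def by auto
    show "{(j,k). j + 2 \<le> k \<and> k < ?N \<and> A (a0 - j) (a0 - k)} = {} \<or>
      (\<exists>t. 0 < t \<and> t + 2 < ?N \<and> {(j,k). j + 2 \<le> k \<and> k < ?N \<and> A (a0 - j) (a0 - k)} = {(t - 1, t + 1)})" using CH F by (intro disjI2 exI[of _ "a0 - tc"]) auto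
    show "({(j,k). j + 2 \<le> k \<and> k < ?N \<and> A (a0 - j) (a0 - k)} = {(0,2)} \<and> \<not> H (a0 - (1::nat)) \<and> \<not> H (a0 - (2::nat)))
      \<or> ({(j,k). j + 2 \<le> k \<and> k < ?N \<and> A (a0 - j) (a0 - k)} = {(1,3)} \<and> (\<not> H (a0 - (1::nat)) \<or> \<not> H (a0 - (3::nat))))
      \<or> ((0,2) \<notin> {(j,k). j + 2 \<le> k \<and> k < ?N \<and> A (a0 - j) (a0 - k)} \<and> \<not> H (a0 - (1::nat)))
      \<or> ((0,2) \<notin> {(j,k). j + 2 \<le> k \<and> k < ?N \<and> A (a0 - j) (a0 - k)} \<and> (1,3) \<notin> {(j,k). j + 2 \<le> k \<and> k < ?N \<and> A (a0 - j) (a0 - k)} \<and> H (a0 - (1::nat)) \<and> \<not> H (a0 - (2::nat)))" unfolding CH using F by simp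
  qed
qed

lemma near_fwd_T1:
  assumes F: "a0 = Suc b" "a0 \<le> L" "H b" "H a0" "H c" "c + 2 \<le> b" "\<And>a. c < a \<Longrightarrow> a < b \<Longrightarrow> \<not> H a" "odd b" "odd c" "hc" "tc = Suc c" "tc \<noteq> b - 1"
  shows "\<exists>ps z'. near_obstruction V E ps z'"
proof -
  let ?N = "Suc (a0 - c)"
  show ?thesis
  proof (rule near_build[of ?N "\<lambda>j. c + j"])
    show "4 \<le> ?N" using F by simp
    show "even ?N" using F by simp
    show "inj_on (\<lambda>j. c + j) {..<?N}" by (rule inj_onI) (use F in \<open>auto split: if_splits\<close>)
    show "\<And>j. j < ?N \<Longrightarrow> c + j \<le> L" using F by auto
    show "\<And>j. Suc j < ?N \<Longrightarrow> A (c + j) (c + (Suc j))" using F unfolding A_def by auto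
    show "H (c + (0::nat))" using F by simp
    show "H (c + (?N - 1))" using F by simp
    have CH: "{(j,k). j + 2 \<le> k \<and> k < ?N \<and> A (c + j) (c + k)} = {(0,2)}" using F unfolding A_def by auto
    show "{(j,k). j + 2 \<le> k \<and> k < ?N \<and> A (c + j) (c + k)} = {} \<or>
      (\<exists>t. 0 < t \<and> t + 2 < ?N \<and> {(j,k). j + 2 \<le> k \<and> k < ?N \<and> A (c + j) (c + k)} = {(t - 1, t + 1)})" using CH F by (intro disjI2 exI[of _ "1"]) auto
    show "({(j,k). j + 2 \<le> k \<and> k < ?N \<and> A (c + j) (c + k)} = {(0,2)} \<and> \<not> H (c + (1::nat)) \<and> \<not> H (c + (2::nat)))
      \<or> ({(j,k). j + 2 \<le> k \<and> k < ?N \<and> A (c + j) (c + k)} = {(1,3)} \<and> (\<not> H (c + (1::nat)) \<or> \<not> H (c + (3::nat))))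
      \<or> ((0,2) \<notin> {(j,k). j + 2 \<le> k \<and> k < ?N \<and> A (c + j) (c + k)} \<and> \<not> H (c + (1::nat)))
      \<or> ((0,2) \<notin> {(j,k). j + 2 \<le> k \<and> k < ?N \<and> A (c + j) (c + k)} \<and> (1,3) \<notin> {(j,k). j + 2 \<le> k \<and> k < ?N \<and> A (c + j) (c + k)} \<and> H (c + (1::nat)) \<and> \<not> H (c + (2::nat)))" unfolding CH using F by simp
  qed
qed

lemma near_rev_T2:
  assumes F: "a0 = Suc b" "a0 \<le> L" "H b" "H a0" "H c" "c + 2 \<le> b" "\<And>a. c < a \<Longrightarrow> a < b \<Longrightarrow> \<not> H a" "odd b" "odd c" "hc" "tc = b - 1" "tc \<noteq> Suc c"
  shows "\<exists>ps z'. near_obstruction V E ps z'"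
proof -
  let ?N = "Suc (a0 - c)"
  show ?thesis
  proof (rule near_build[of ?N "\<lambda>j. a0 - j"])
    show "4 \<le> ?N" using F by simp
    show "even ?N" using F by simp
    show "inj_on (\<lambda>j. a0 - j) {..<?N}" by (rule inj_onI) (use F in \<open>auto split: if_splits\<close>)
    show "\<And>j. j < ?N \<Longrightarrow> a0 - j \<le> L" using F by auto
    show "\<And>j. Suc j < ?N \<Longrightarrow> A (a0 - j) (a0 - (Suc j))" using F unfolding A_def by auto
    show "H (a0 - (0::nat))" using F by simp
    show "H (a0 - (?N - 1))" using F by simp
    have CH: "{(j,k). j + 2 \<le> k \<and> k < ?N \<and> A (a0 - j) (a0 - k)} = {(1,3)}" using F unfolding A_def by auto
    show "{(j,k). j + 2 \<le> k \<and> k < ?N \<and> A (a0 - j) (a0 - k)} = {} \<or>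
      (\<exists>t. 0 < t \<and> t + 2 < ?N \<and> {(j,k). j + 2 \<le> k \<and> k < ?N \<and> A (a0 - j) (a0 - k)} = {(t - 1, t + 1)})" using CH F by (intro disjI2 exI[of _ "2"]) auto
    show "({(j,k). j + 2 \<le> k \<and> k < ?N \<and> A (a0 - j) (a0 - k)} = {(0,2)} \<and> \<not> H (a0 - (1::nat)) \<and> \<not> H (a0 - (2::nat)))
      \<or> ({(j,k). j + 2 \<le> k \<and> k < ?N \<and> A (a0 - j) (a0 - k)} = {(1,3)} \<and> (\<not> H (a0 - (1::nat)) \<or> \<not> H (a0 - (3::nat))))
      \<or> ((0,2) \<notin> {(j,k). j + 2 \<le> k \<and> k < ?N \<and> A (a0 - j) (a0 - k)} \<and> \<not> H (a0 - (1::nat)))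
      \<or> ((0,2) \<notin> {(j,k). j + 2 \<le> k \<and> k < ?N \<and> A (a0 - j) (a0 - k)} \<and> (1,3) \<notin> {(j,k). j + 2 \<le> k \<and> k < ?N \<and> A (a0 - j) (a0 - k)} \<and> H (a0 - (1::nat)) \<and> \<not> H (a0 - (2::nat)))" unfolding CH using F by simp
  qed
qed

lemma core_delta:
  assumes F: "a0 = Suc b" "a0 \<le> L" "H b" "H a0" "H c" "b = c + 2" "\<And>a. a < c \<Longrightarrow> \<not> H a" "odd c" "hc" "tc = Suc c"
  shows "\<exists>C. corep C"
proof -
  let ?M = "c + 2"
  show ?thesis
  proof (rule core_build[of ?M "\<lambda>j. if j \<le> c then j else Suc j"])
    show "odd ?M" using F by simp
    show "(if 0 \<le> c then 0 else Suc 0) = 0" using F by simp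
    show "inj_on (\<lambda>j. if j \<le> c then j else Suc j) {..<?M}" by (rule inj_onI) (use F in \<open>auto split: if_splits\<close>)
    show "\<And>j. j < ?M \<Longrightarrow> (if j \<le> c then j else Suc j) \<le> L" using F by auto
    show "\<And>j. Suc j < ?M \<Longrightarrow> A ((if j \<le> c then j else Suc j)) ((if (Suc j) \<le> c then (Suc j) else Suc (Suc j)))" using F unfolding A_def by auto
    show "H ((if (?M - 1) \<le> c then (?M - 1) else Suc (?M - 1)))" using F by simp
    have CH: "{(j,k). j + 2 \<le> k \<and> k < ?M \<and> A ((if j \<le> c then j else Suc j)) ((if k \<le> c then k else Suc k))} \<union> {(j,k). k = ?M \<and> j + 2 \<le> ?M \<and> H ((if j \<le> c then j else Suc j))} = {(c, c + 2)}" using F unfolding A_def by (auto simp: le_less split: if_splits)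
    show "{(j,k). j + 2 \<le> k \<and> k < ?M \<and> A ((if j \<le> c then j else Suc j)) ((if k \<le> c then k else Suc k))} \<union> {(j,k). k = ?M \<and> j + 2 \<le> ?M \<and> H ((if j \<le> c then j else Suc j))} = {} \<or>
    (\<exists>t. 0 < t \<and> t + 1 \<le> ?M \<and> {(j,k). j + 2 \<le> k \<and> k < ?M \<and> A ((if j \<le> c then j else Suc j)) ((if k \<le> c then k else Suc k))} \<union> {(j,k). k = ?M \<and> j + 2 \<le> ?M \<and> H ((if j \<le> c then j else Suc j))} = {(t - 1, t + 1)})" using CH F by (intro disjI2 exI[of _ "Suc c"]) auto
  qed
qed

lemma near_delta:
  assumes F: "a0 = Suc b" "a0 \<le> L" "H b" "H a0" "H c" "b = c + 2" "H e" "e + 2 \<le> c" "\<And>a. e < a \<Longrightarrow> a < c \<Longrightarrow> \<not> H a" "odd c" "odd e" "hc" "tc = Suc c"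
  shows "\<exists>ps z'. near_obstruction V E ps z'"
proof -
  let ?N = "c - e + 2"
  show ?thesis
  proof (rule near_build[of ?N "\<lambda>j. if j = 0 then b else c + 1 - j"])
    show "4 \<le> ?N" using F by simp
    show "even ?N" using F by simp
    show "inj_on (\<lambda>j. if j = 0 then b else c + 1 - j) {..<?N}" by (rule inj_onI) (use F in \<open>auto split: if_splits\<close>)
    show "\<And>j. j < ?N \<Longrightarrow> (if j = 0 then b else c + 1 - j) \<le> L" using F by auto
    show "\<And>j. Suc j < ?N \<Longrightarrow> A ((if j = 0 then b else c + 1 - j)) ((if (Suc j) = 0 then b else c + 1 - (Suc j)))" using F unfolding A_def by auto
    show "H ((if (0::nat) = 0 then b else c + 1 - (0::nat)))" using F by simp
    show "H ((if (?N - 1) = 0 then b else c + 1 - (?N - 1)))" using F by simp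
    have CH: "{(j,k). j + 2 \<le> k \<and> k < ?N \<and> A ((if j = 0 then b else c + 1 - j)) ((if k = 0 then b else c + 1 - k))} = {}" using F unfolding A_def by auto
    show "{(j,k). j + 2 \<le> k \<and> k < ?N \<and> A ((if j = 0 then b else c + 1 - j)) ((if k = 0 then b else c + 1 - k))} = {} \<or>
      (\<exists>t. 0 < t \<and> t + 2 < ?N \<and> {(j,k). j + 2 \<le> k \<and> k < ?N \<and> A ((if j = 0 then b else c + 1 - j)) ((if k = 0 then b else c + 1 - k))} = {(t - 1, t + 1)})" using CH by simp
    show "({(j,k). j + 2 \<le> k \<and> k < ?N \<and> A ((if j = 0 then b else c + 1 - j)) ((if k = 0 then b else c + 1 - k))} = {(0,2)} \<and> \<not> H ((if (1::nat) = 0 then b else c + 1 - (1::nat))) \<and> \<not> H ((if (2::nat) = 0 then b else c + 1 - (2::nat))))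
      \<or> ({(j,k). j + 2 \<le> k \<and> k < ?N \<and> A ((if j = 0 then b else c + 1 - j)) ((if k = 0 then b else c + 1 - k))} = {(1,3)} \<and> (\<not> H ((if (1::nat) = 0 then b else c + 1 - (1::nat))) \<or> \<not> H ((if (3::nat) = 0 then b else c + 1 - (3::nat)))))
      \<or> ((0,2) \<notin> {(j,k). j + 2 \<le> k \<and> k < ?N \<and> A ((if j = 0 then b else c + 1 - j)) ((if k = 0 then b else c + 1 - k))} \<and> \<not> H ((if (1::nat) = 0 then b else c + 1 - (1::nat))))
      \<or> ((0,2) \<notin> {(j,k). j + 2 \<le> k \<and> k < ?N \<and> A ((if j = 0 then b else c + 1 - j)) ((if k = 0 then b else c + 1 - k))} \<and> (1,3) \<notin> {(j,k). j + 2 \<le> k \<and> k < ?N \<and> A ((if j = 0 then b else c + 1 - j)) ((if k = 0 then b else c + 1 - k))} \<and> H ((if (1::nat) = 0 then b else c + 1 - (1::nat))) \<and> \<not> H ((if (2::nat) = 0 then b else c + 1 - (2::nat))))" unfolding CH using F by simp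
  qed
qed

lemma near_eps:
  assumes F: "a0 = Suc b" "a0 \<le> L" "H b" "H a0" "H c" "c + 2 \<le> b" "\<And>a. c < a \<Longrightarrow> a < b \<Longrightarrow> \<not> H a" "odd b" "odd c" "hc" "tc = b" "H (b + 2)" "b + 2 \<le> L"
  shows "\<exists>ps z'. near_obstruction V E ps z'"
proof -
  let ?N = "b - c + 2"
  show ?thesis
  proof (rule near_build[of ?N "\<lambda>j. if j = 0 then b + 2 else if j = 1 then b + 1 else b + 1 - j"])
    show "4 \<le> ?N" using F by simp
    show "even ?N" using F by simp
    show "inj_on (\<lambda>j. if j = 0 then b + 2 else if j = 1 then b + 1 else b + 1 - j) {..<?N}" by (rule inj_onI) (use F in \<open>auto split: if_splits\<close>)
    show "\<And>j. j < ?N \<Longrightarrow> (if j = 0 then b + 2 else if j = 1 then b + 1 else b + 1 - j) \<le> L" using F by auto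
    show "\<And>j. Suc j < ?N \<Longrightarrow> A ((if j = 0 then b + 2 else if j = 1 then b + 1 else b + 1 - j)) ((if (Suc j) = 0 then b + 2 else if (Suc j) = 1 then b + 1 else b + 1 - (Suc j)))" using F unfolding A_def by auto
    show "H ((if (0::nat) = 0 then b + 2 else if (0::nat) = 1 then b + 1 else b + 1 - (0::nat)))" using F by simp
    show "H ((if (?N - 1) = 0 then b + 2 else if (?N - 1) = 1 then b + 1 else b + 1 - (?N - 1)))" using F by simp
    have CH: "{(j,k). j + 2 \<le> k \<and> k < ?N \<and> A ((if j = 0 then b + 2 else if j = 1 then b + 1 else b + 1 - j)) ((if k = 0 then b + 2 else if k = 1 then b + 1 else b + 1 - k))} = {}" using F unfolding A_def by auto
    show "{(j,k). j + 2 \<le> k \<and> k < ?N \<and> A ((if j = 0 then b + 2 else if j = 1 then b + 1 else b + 1 - j)) ((if k = 0 then b + 2 else if k = 1 then b + 1 else b + 1 - k))} = {} \<or>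
      (\<exists>t. 0 < t \<and> t + 2 < ?N \<and> {(j,k). j + 2 \<le> k \<and> k < ?N \<and> A ((if j = 0 then b + 2 else if j = 1 then b + 1 else b + 1 - j)) ((if k = 0 then b + 2 else if k = 1 then b + 1 else b + 1 - k))} = {(t - 1, t + 1)})" using CH by simp
    show "({(j,k). j + 2 \<le> k \<and> k < ?N \<and> A ((if j = 0 then b + 2 else if j = 1 then b + 1 else b + 1 - j)) ((if k = 0 then b + 2 else if k = 1 then b + 1 else b + 1 - k))} = {(0,2)} \<and> \<not> H ((if (1::nat) = 0 then b + 2 else if (1::nat) = 1 then b + 1 else b + 1 - (1::nat))) \<and> \<not> H ((if (2::nat) = 0 then b + 2 else if (2::nat) = 1 then b + 1 else b + 1 - (2::nat))))
      \<or> ({(j,k). j + 2 \<le> k \<and> k < ?N \<and> A ((if j = 0 then b + 2 else if j = 1 then b + 1 else b + 1 - j)) ((if k = 0 then b + 2 else if k = 1 then b + 1 else b + 1 - k))} = {(1,3)} \<and> (\<not> H ((if (1::nat) = 0 then b + 2 else if (1::nat) = 1 then b + 1 else b + 1 - (1::nat))) \<or> \<not> H ((if (3::nat) = 0 then b + 2 else if (3::nat) = 1 then b + 1 else b + 1 - (3::nat)))))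
      \<or> ((0,2) \<notin> {(j,k). j + 2 \<le> k \<and> k < ?N \<and> A ((if j = 0 then b + 2 else if j = 1 then b + 1 else b + 1 - j)) ((if k = 0 then b + 2 else if k = 1 then b + 1 else b + 1 - k))} \<and> \<not> H ((if (1::nat) = 0 then b + 2 else if (1::nat) = 1 then b + 1 else b + 1 - (1::nat))))
      \<or> ((0,2) \<notin> {(j,k). j + 2 \<le> k \<and> k < ?N \<and> A ((if j = 0 then b + 2 else if j = 1 then b + 1 else b + 1 - j)) ((if k = 0 then b + 2 else if k = 1 then b + 1 else b + 1 - k))} \<and> (1,3) \<notin> {(j,k). j + 2 \<le> k \<and> k < ?N \<and> A ((if j = 0 then b + 2 else if j = 1 then b + 1 else b + 1 - j)) ((if k = 0 then b + 2 else if k = 1 then b + 1 else b + 1 - k))} \<and> H ((if (1::nat) = 0 then b + 2 else if (1::nat) = 1 then b + 1 else b + 1 - (1::nat))) \<and> \<not> H ((if (2::nat) = 0 then b + 2 else if (2::nat) = 1 then b + 1 else b + 1 - (2::nat))))" unfolding CH using F by simp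
  qed
qed

end

context hubctx begin

theorem hub: "(\<exists>ps z'. near_obstruction V E ps z') \<or> (\<exists>C. corep C)"
proof -
  have ex0: "\<exists>a. a \<le> L \<and> H a \<and> even a" using zL Lev unfolding H_def by blast
  define a0 where "a0 = (LEAST a. a \<le> L \<and> H a \<and> even a)"
  have a0P: "a0 \<le> L \<and> H a0 \<and> even a0" unfolding a0_def by (rule LeastI_ex[OF ex0])
  have a0min: "odd a" if "a < a0" "H a" for a
  proof -
    have "\<not> (a \<le> L \<and> H a \<and> even a)" using that(1) unfolding a0_def by (rule not_less_Least)
    then show "odd a" using a0P that by auto
  qed
  show ?thesis
  proof (cases "\<exists>a<a0. H a")
    case False then show ?thesis using hub_case_i a0P by blast
  next
    case True
    then obtain a1 where a1: "H a1" "a1 < a0" by blast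
    obtain b where b: "H b" "b < a0" "\<forall>x. H x \<longrightarrow> x < a0 \<longrightarrow> x \<le> b" using ex_max_below[of H a1 a0] a1 by blast
    have ob: "odd b" using a0min b by blast
    have nb: "\<And>a. b < a \<Longrightarrow> a < a0 \<Longrightarrow> \<not> H a" using b by force
    have "a0 \<noteq> b + 2" using ob a0P by auto
    then consider (g3) "b + 3 \<le> a0" | (g1) "a0 = Suc b" using b(2) by linarith
    then show ?thesis
    proof cases
      case g3 then show ?thesis using hub_case_gap3[of a0 b] a0P b(1) nb ob by blast
    next
      case g1
      show ?thesis
      proof (cases "\<exists>a<b. H a")
        case False
        then have nh: "\<And>a. a < b \<Longrightarrow> \<not> H a" by blast
        show ?thesis
        proof (cases "hc \<and> tc \<le> b")
          case False then show ?thesis using core_gap1_a[of a0 b] g1 a0P b(1) nh ob by blast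
        next
          case True
          then consider "tc < b" | "tc = b" by linarith
          then show ?thesis
          proof cases
            case 1 then show ?thesis using core_gap1_b[of a0 b] g1 a0P b(1) nh ob True tcb by blast
          next
            case 2
            show ?thesis
            proof (cases "H (b + 2)")
              case True then show ?thesis using core_gap1_c[of a0 b] g1 a0P b(1) nh ob \<open>hc \<and> tc \<le> b\<close> 2 tcb by auto
            next
              case False then show ?thesis using near_T4_tail[of b] g1 a0P b(1) ob \<open>hc \<and> tc \<le> b\<close> 2 by auto
            qed
          qed
        qed
      next
        case True
        then obtain a2 where a2: "H a2" "a2 < b" by blast
        obtain c where c: "H c" "c < b" "\<forall>x. H x \<longrightarrow> x < b \<longrightarrow> x \<le> c" using ex_max_below[of H a2 b] a2 by blast
        have oc: "odd c" using a0min c b by (meson order.strict_trans)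
        have nc: "\<And>a. c < a \<Longrightarrow> a < b \<Longrightarrow> \<not> H a" using c by force
        have c2: "c + 2 \<le> b"
        proof -
          have "b \<noteq> c + 1" using oc ob by auto
          then show ?thesis using c(2) by linarith
        qed
        show ?thesis
        proof (cases "hc \<and> c < tc \<and> tc \<le> b")
          case False then show ?thesis using near_rev_a1[of a0 b c] g1 a0P b(1) c(1) c2 nc ob oc by blast
        next
          case True
          have hc: hc using True by blast
          show ?thesis
          proof (cases "tc = b")
            case tb: True
            show ?thesis
            proof (cases "H (b + 2)")
              case True then show ?thesis using near_eps[of a0 b c] g1 a0P b(1) c(1) c2 nc ob oc hc tb tcb by auto
            next
              case False then show ?thesis using near_T4_tail[of b] g1 a0P b(1) ob hc tb by auto
            qed
          next
            case nb': False
            show ?thesis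
            proof (cases "tc = b - 1 \<and> tc = Suc c")
              case d: True
              then have bc: "b = c + 2" using c2 by linarith
              show ?thesis
              proof (cases "\<exists>a<c. H a")
                case False
                then have "\<And>a. a < c \<Longrightarrow> \<not> H a" by blast
                then show ?thesis using core_delta[of a0 b c] g1 a0P b(1) c(1) bc oc hc d by blast
              next
                case True
                then obtain a3 where a3: "H a3" "a3 < c" by blast
                obtain e where e: "H e" "e < c" "\<forall>x. H x \<longrightarrow> x < c \<longrightarrow> x \<le> e" using ex_max_below[of H a3 c] a3 by blast
                have oe: "odd e" using a0min e c b by (meson order.strict_trans)
                have ne: "\<And>a. e < a \<Longrightarrow> a < c \<Longrightarrow> \<not> H a" using e by force
                have e2: "e + 2 \<le> c"
                proof -
                  have "c \<noteq> e + 1" using oc oe by auto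
                  then show ?thesis using e(2) by linarith
                qed
                show ?thesis using near_delta[of a0 b c e] g1 a0P b(1) c(1) bc e(1) e2 ne oc oe hc d by blast
              qed
            next
              case nd: False
              show ?thesis
              proof (cases "tc = Suc c")
                case True then show ?thesis using near_fwd_T1[of a0 b c] g1 a0P b(1) c(1) c2 nc ob oc hc nd by blast
              next
                case ns: False
                show ?thesis
                proof (cases "tc = b - 1")
                  case True then show ?thesis using near_rev_T2[of a0 b c] g1 a0P b(1) c(1) c2 nc ob oc hc ns by blast
                next
                  case False
                  then have "c + 1 < tc" "tc + 1 < b" using True nb' ns by auto
                  then show ?thesis using near_rev_a2[of a0 b c] g1 a0P b(1) c(1) c2 nc ob oc hc by blast
                qed
              qed
            qed
          qed
        qed
      qed
    qed
  qed
qed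

end

lemma rev_cons_adj:
  assumes sym: "\<And>a b. ES a b \<Longrightarrow> ES b a" and c: "\<forall>j. Suc j < length C \<longrightarrow> ES (C!j) (C!Suc j)"
  shows "\<forall>j. Suc j < length (rev C) \<longrightarrow> ES (rev C ! j) (rev C ! Suc j)"
proof (intro allI impI)
  fix j assume j: "Suc j < length (rev C)"
  let ?l = "length C"
  have "ES (C ! (?l - Suc (Suc j))) (C ! Suc (?l - Suc (Suc j)))" using c j by simp
  moreover have "Suc (?l - Suc (Suc j)) = ?l - Suc j" using j by simp
  ultimately have "ES (C ! (?l - Suc j)) (C ! (?l - Suc (Suc j)))" using sym by metis
  then show "ES (rev C ! j) (rev C ! Suc j)" using j by (simp add: rev_nth)
qed

lemma chords_rev:
  assumes sym: "\<And>a b. ES a b \<Longrightarrow> ES b a"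
  shows "chords ES (rev C) = (\<lambda>(j,k). (length C - 1 - k, length C - 1 - j)) ` chords ES C"
proof -
  let ?l = "length C"
  let ?f = "\<lambda>(j,k). (?l - 1 - k, ?l - 1 - j)"
  show ?thesis
  proof (rule set_eqI, rule iffI)
    fix p assume "p \<in> chords ES (rev C)"
    then obtain j k where p: "p = (j,k)" "j + 2 \<le> k" "k < ?l" "ES (rev C ! j) (rev C ! k)"
      unfolding chords_def by auto
    have "rev C ! j = C ! (?l - 1 - j)" "rev C ! k = C ! (?l - 1 - k)" using p by (auto simp: rev_nth)
    then have "ES (C ! (?l - 1 - j)) (C ! (?l - 1 - k))" using p by simp
    then have "ES (C ! (?l - 1 - k)) (C ! (?l - 1 - j))" by (rule sym)
    then have "(?l - 1 - k, ?l - 1 - j) \<in> chords ES C" unfolding chords_def using p by auto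
    moreover have "?f (?l - 1 - k, ?l - 1 - j) = p" using p by auto
    ultimately show "p \<in> ?f ` chords ES C" by (metis image_eqI)
  next
    fix p assume "p \<in> ?f ` chords ES C"
    then obtain j k where jk: "j + 2 \<le> k" "k < ?l" "ES (C ! j) (C ! k)" and p: "p = (?l - 1 - k, ?l - 1 - j)"
      unfolding chords_def by auto
    have "rev C ! (?l - 1 - k) = C ! k" "rev C ! (?l - 1 - j) = C ! j" using jk by (auto simp: rev_nth)
    moreover have "ES (C ! k) (C ! j)" using jk(3) by (rule sym)
    ultimately have B: "ES (rev C ! (?l - 1 - k)) (rev C ! (?l - 1 - j))" by simp
    have A: "?l - 1 - k + 2 \<le> ?l - 1 - j" "?l - 1 - j < length (rev C)" using jk by auto
    show "p \<in> chords ES (rev C)" unfolding chords_def p using A B by blast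
  qed
qed

lemma good_core_rev:
  assumes sym: "\<And>a b. ES a b \<Longrightarrow> ES b a" and g: "good_core ES C"
  shows "good_core ES (rev C)"
proof -
  have cr: "chords ES (rev C) = (\<lambda>(j,k). (length C - 1 - k, length C - 1 - j)) ` chords ES C"
    by (rule chords_rev[OF sym])
  from g consider "chords ES C = {}" | t where "0 < t" "t + 2 \<le> length C" "chords ES C = {(t - 1, t + 1)}"
    unfolding good_core_def by blast
  then show ?thesis
  proof cases
    case 1 then show ?thesis unfolding good_core_def cr by simp
  next
    case 2
    have "chords ES (rev C) = {(length C - 1 - (t + 1), length C - 1 - (t - 1))}" using cr 2 by simp
    also have "\<dots> = {((length C - 1 - t) - 1, (length C - 1 - t) + 1)}" using 2 by auto
    finally show ?thesis unfolding good_core_def using 2 by (intro disjI2 exI[of _ "length C - 1 - t"]) auto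
  qed
qed

lemma core_to_bad:
  assumes symE: "\<And>a b. E a b \<Longrightarrow> E b a"
    and proper: "\<And>u w. E u w \<Longrightarrow> col u \<noteq> col w"
    and xsd: "distinct xs" and xsV: "set xs \<subseteq> V" and xsc: "\<forall>x\<in>set xs. col x = c"
    and m: "m < length xs"
    and D: "D \<noteq> []" "distinct D" "\<forall>j. Suc j < length D \<longrightarrow> E (D!j) (D!Suc j)"
    and Dsub: "set D \<subseteq> gstar_rem V col c xs m"
    and gc: "good_core E D" and ev: "even (length D)"
    and hdw: "\<exists>x\<in>set (take m xs). E x (D!0)"
    and nohd: "\<And>j. 0 < j \<Longrightarrow> j < length D \<Longrightarrow> \<not> (\<exists>x\<in>set (take m xs). E x (D!j))"
    and lastadj: "E (last D) (xs!m)"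
    and nolast: "\<And>j. Suc j < length D \<Longrightarrow> \<not> E (D!j) (xs!m)"
    and notin: "xs!m \<notin> set D"
  shows "bad_path V E col c xs (Suc m) (None # map Some D @ [Some (xs!m)])"
proof -
  define Q where "Q = None # map Some D @ [Some (xs!m)]"
  define R where "R = gstar_rem V col c xs m"
  let ?gE = "gstar_E V E col c xs m"
  let ?l = "length D"
  have lenQ: "length Q = ?l + 2" unfolding Q_def by simp
  have Q0: "Q ! 0 = None" unfolding Q_def by simp
  have QS: "\<And>j. j < ?l \<Longrightarrow> Q ! Suc j = Some (D!j)" unfolding Q_def by (simp add: nth_append)
  have QL: "Q ! Suc ?l = Some (xs!m)" unfolding Q_def by (simp add: nth_append)
  have lastQ: "last Q = Some (xs!m)" unfolding Q_def by simp
  have xmR: "xs!m \<in> R"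
  proof -
    have "xs!m \<in> V" "col (xs!m) = c" using m xsV xsc nth_mem by blast+
    moreover have "xs!m \<notin> set (take m xs)"
    proof
      assume "xs!m \<in> set (take m xs)"
      then obtain a where "a < length (take m xs)" "take m xs ! a = xs ! m" by (metis in_set_conv_nth)
      then have "a < m" "xs ! a = xs ! m" by auto
      then show False using nth_eq_iff_index_eq[OF xsd] m by fastforce
    qed
    ultimately show ?thesis unfolding R_def gstar_rem_def by auto
  qed
  have DR: "\<And>j. j < ?l \<Longrightarrow> D!j \<in> R" using Dsub nth_mem unfolding R_def by blast
  have gSS: "\<And>u w. u \<in> R \<Longrightarrow> w \<in> R \<Longrightarrow> ?gE (Some u) (Some w) \<longleftrightarrow> E u w"
    unfolding gstar_E_def R_def by simp
  have gNS: "\<And>w. ?gE None (Some w) \<longleftrightarrow> w \<in> R \<and> (\<exists>x\<in>set (take m xs). E x w)"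
    unfolding gstar_E_def gstar_w_adj_def R_def by simp
  have dQ: "distinct Q" unfolding Q_def using D(2) notin by (auto simp: distinct_map)
  have sQ: "set Q \<subseteq> gstar_V V col c xs m" unfolding Q_def gstar_V_def using Dsub xmR R_def by auto
  have cQ: "\<forall>j. Suc j < length Q \<longrightarrow> ?gE (Q!j) (Q!Suc j)"
  proof (intro allI impI)
    fix j assume j: "Suc j < length Q"
    consider "j = 0" | j' where "j = Suc j'" "Suc j' < ?l" | "j = ?l" "0 < ?l" using j lenQ D(1)
      by (cases j) (auto, linarith)
    then show "?gE (Q!j) (Q!Suc j)"
    proof cases
      case 1 then show ?thesis using Q0 QS[of 0] D(1) gNS DR hdw by auto
    next
      case 2 then show ?thesis using QS gSS DR D(3) by simp
    next
      case 3
      have "last D = D ! (?l - 1)" using D(1) by (simp add: last_conv_nth)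
      then have "Q ! j = Some (last D)" using QS[of "?l - 1"] 3 by simp
      then show ?thesis using QL 3 gSS DR xmR lastadj \<open>last D = D ! (?l - 1)\<close> by simp
    qed
  qed
  have chQ: "chords ?gE Q = (\<lambda>(j,k). (Suc j, Suc k)) ` chords E D"
  proof (rule set_eqI, rule iffI)
    fix p assume "p \<in> chords ?gE Q"
    then obtain j k where p: "p = (j,k)" "j + 2 \<le> k" "k < ?l + 2" "?gE (Q!j) (Q!k)"
      unfolding chords_def lenQ by auto
    have j0: "j \<noteq> 0"
    proof
      assume j00: "j = 0"
      show False
      proof (cases "k = Suc ?l")
        case True
        then have "?gE None (Some (xs!m))" using p(4) j00 Q0 QL by simp
        then obtain x where x: "x \<in> set (take m xs)" "E x (xs!m)" using gNS by blast
        have "x \<in> set xs" using x(1) by (rule in_set_takeD)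
        then have "col x = c" using xsc by blast
        moreover have "col (xs!m) = c" using xsc m by simp
        ultimately show False using proper[OF x(2)] by simp
      next
        case False
        then have k1: "k - 1 < ?l" "0 < k - 1" using p by auto
        have "Suc (k - 1) = k" using k1 by simp
        then have "Q ! k = Some (D ! (k - 1))" using QS[OF k1(1)] by simp
        then have "?gE None (Some (D ! (k - 1)))" using p(4) j00 Q0 by simp
        then have "\<exists>x\<in>set (take m xs). E x (D ! (k - 1))" using gNS by blast
        then show False using nohd[OF k1(2) k1(1)] by blast
      qed
    qed
    have kl: "k \<noteq> Suc ?l"
    proof
      assume k: "k = Suc ?l"
      have "j - 1 < ?l" "Suc (j - 1) < ?l" using p j0 k by auto
      then have "Q ! j = Some (D ! (j - 1))" using QS[of "j - 1"] j0 by simp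
      then have "E (D ! (j - 1)) (xs!m)" using p k QL gSS DR xmR \<open>j - 1 < ?l\<close> by auto
      then show False using nolast \<open>Suc (j - 1) < ?l\<close> by blast
    qed
    have jl: "j - 1 < ?l" "k - 1 < ?l" using p kl j0 by auto
    have sj: "Suc (j - 1) = j" "Suc (k - 1) = k" using j0 p by auto
    have qj: "Q ! j = Some (D ! (j - 1))" using QS[OF jl(1)] sj(1) by simp
    have qk: "Q ! k = Some (D ! (k - 1))" using QS[OF jl(2)] sj(2) by simp
    have "E (D ! (j - 1)) (D ! (k - 1))" using p(4) qj qk gSS DR jl by simp
    then have "(j - 1, k - 1) \<in> chords E D" unfolding chords_def using p jl j0 by auto
    moreover have "p = (\<lambda>(j,k). (Suc j, Suc k)) (j - 1, k - 1)" using p(1) sj by simp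
    ultimately show "p \<in> (\<lambda>(j,k). (Suc j, Suc k)) ` chords E D" by (rule rev_image_eqI)
  next
    fix p assume "p \<in> (\<lambda>(j,k). (Suc j, Suc k)) ` chords E D"
    then obtain j k where jk: "j + 2 \<le> k" "k < ?l" "E (D!j) (D!k)" and p: "p = (Suc j, Suc k)"
      unfolding chords_def by auto
    have "?gE (Q ! Suc j) (Q ! Suc k)" using QS jk gSS DR by simp
    then show "p \<in> chords ?gE Q" unfolding chords_def lenQ p using jk by auto
  qed
  have cok: "chord_ok ?gE Q 1"
  proof -
    from gc consider "chords E D = {}" | t where "0 < t" "t + 2 \<le> ?l" "chords E D = {(t - 1, t + 1)}"
      unfolding good_core_def by blast
    then show ?thesis
    proof cases
      case 1 then show ?thesis unfolding chord_ok_def chQ by simp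
    next
      case 2
      have "chords ?gE Q = {(Suc t - 1, Suc t + 1)}" using chQ 2 by auto
      then show ?thesis unfolding chord_ok_def lenQ using 2 by (intro disjI2 exI[of _ "Suc t"]) auto
    qed
  qed
  show ?thesis unfolding bad_path_def path_in_def
    using dQ sQ cQ cok Q0 lastQ lenQ ev m unfolding Q_def[symmetric] by auto
qed

lemma take_filter_nth:
  assumes "distinct \<sigma>" "m < length (filter P \<sigma>)" "q < length \<sigma>" "\<sigma> ! q = filter P \<sigma> ! m"
  shows "take m (filter P \<sigma>) = filter P (take q \<sigma>)"
proof -
  let ?xs = "filter P \<sigma>"
  have dec: "\<sigma> = take q \<sigma> @ \<sigma> ! q # drop (Suc q) \<sigma>"
    using assms(3) by (simp add: id_take_nth_drop)
  have Pq: "P (\<sigma> ! q)" using assms(2,4) nth_mem[OF assms(2)] by (metis mem_Collect_eq set_filter)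
  have fx: "?xs = filter P (take q \<sigma>) @ \<sigma> ! q # filter P (drop (Suc q) \<sigma>)"
    using Pq by (subst dec) simp
  let ?l = "length (filter P (take q \<sigma>))"
  have l1: "?l < length ?xs" using fx by simp
  have l2: "?xs ! ?l = ?xs ! m" using fx assms(4) by (metis nth_append_length)
  have dxs: "distinct ?xs" using assms(1) by simp
  have "?l = m" using nth_eq_iff_index_eq[OF dxs l1 assms(2)] l2 by simp
  then show ?thesis using fx by simp
qed

lemma near_intro:
  assumes N: "4 \<le> N" "even N" and finj: "inj_on f {..<N}" and fV: "\<And>j. j < N \<Longrightarrow> f j \<in> V"
    and cons: "\<And>j. Suc j < N \<Longrightarrow> E (f j) (f (Suc j))"
    and z: "z \<in> V" "\<And>j. j < N \<Longrightarrow> z \<noteq> f j" "E z (f 0)" "E z (f (N - 1))"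
    and CH: "{(j,k). j + 2 \<le> k \<and> k < N \<and> E (f j) (f k)} = CS"
    and ok: "CS = {} \<or> (\<exists>t. 0 < t \<and> t + 2 < N \<and> CS = {(t - 1, t + 1)})"
    and ty: "(CS = {(0,2)} \<and> \<not> E z (f 1) \<and> \<not> E z (f 2)) \<or> (CS = {(1,3)} \<and> (\<not> E z (f 1) \<or> \<not> E z (f 3)))
       \<or> ((0,2) \<notin> CS \<and> \<not> E z (f 1)) \<or> ((0,2) \<notin> CS \<and> (1,3) \<notin> CS \<and> E z (f 1) \<and> \<not> E z (f 2))"
  shows "near_obstruction V E (map f [0..<N]) z"
proof -
  define ps where "ps = map f [0..<N]"
  have len: "length ps = N" unfolding ps_def by simp
  have nth: "\<And>j. j < N \<Longrightarrow> ps ! j = f j" unfolding ps_def by simp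
  have chs: "chords E ps = CS" unfolding ps_def chords_map CH ..
  have dist: "distinct ps" unfolding ps_def distinct_map using finj by (simp only: set_upt atLeast0LessThan distinct_upt)
  have setps: "set ps = f ` {..<N}" unfolding ps_def by (simp only: set_map set_upt atLeast0LessThan)
  have ne: "ps \<noteq> []" using len N by auto
  have sub: "set ps \<subseteq> V" using setps fV by auto
  have cons': "\<forall>j. Suc j < length ps \<longrightarrow> E (ps ! j) (ps ! Suc j)" using cons nth len by simp
  have path: "path_in V E ps" unfolding path_in_def using ne dist sub cons' by blast
  have "last ps = ps ! (N - 1)" using ne len by (simp add: last_conv_nth)
  then have lastps: "last ps = f (N - 1)" using N nth by simp
  have zn: "z \<notin> set ps" using z(2) setps by auto
  have n1: "ps ! 1 = f 1" "ps ! 2 = f 2" "ps ! 3 = f 3" "ps ! 0 = f 0" using nth N by auto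
  show ?thesis
    unfolding ps_def[symmetric] near_obstruction_def chord_ok_def chs
    using path N len ok z(1,3,4) zn lastps n1 ty by auto
qed

context lexs begin

lemma step:
  assumes xs: "xs = filter (\<lambda>v. col v = c) \<sigma>"
    and i: "2 \<le> i" "i \<le> length xs"
    and bp: "bad_path V E col c xs i ps"
    and IH: "\<And>k ps'. 2 \<le> k \<Longrightarrow> k < i \<Longrightarrow> bad_path V E col c xs k ps' \<Longrightarrow> \<exists>ps z. near_obstruction V E ps z"
  shows "\<exists>ps z. near_obstruction V E ps z"
proof -
  define X where "X = take (i - 1) xs"
  define R where "R = gstar_rem V col c xs (i - 1)"
  define gE where "gE = gstar_E V E col c xs (i - 1)"
  define xi where "xi = xs ! (i - 1)"
  have i1: "i - 1 < length xs" using i by simp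
  have xsd: "distinct xs" using xs dist by simp
  have xsV: "set xs \<subseteq> V" using xs setV by auto
  have xsc: "\<forall>x\<in>set xs. col x = c" using xs by simp
  have xixs: "xi \<in> set xs" unfolding xi_def using i1 by simp
  then have xiin: "xi \<in> set \<sigma>" using xs by simp
  then obtain s where s: "s < n" "\<sigma> ! s = xi" by (metis in_set_conv_nth)
  have Xeq: "X = filter (\<lambda>v. col v = c) (take s \<sigma>)"
    unfolding X_def xs using take_filter_nth[OF dist, of "i - 1" "\<lambda>v. col v = c" s] i1 s xs xi_def by simp
  have Xmem: "\<And>u. u \<in> set X \<longleftrightarrow> (\<exists>j<s. \<sigma>!j = u) \<and> col u = c"
  proof -
    fix u
    have "u \<in> set (take s \<sigma>) \<longleftrightarrow> (\<exists>j<s. \<sigma>!j = u)" using s(1)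
      by (auto simp: in_set_conv_nth)
    then show "u \<in> set X \<longleftrightarrow> (\<exists>j<s. \<sigma>!j = u) \<and> col u = c" unfolding Xeq by simp
  qed
  have Xsub: "set X \<subseteq> set xs" unfolding X_def by (rule set_take_subset)
  have Xcol: "\<And>x. x \<in> set X \<Longrightarrow> col x = c" using Xmem by blast
  have colxi: "col xi = c" using xixs xsc by blast
  have xiV: "xi \<in> V" using xiin setV by simp
  have c1: "1 \<le> c" using col_pos[OF xiV] colxi by simp
  have cn: "c \<le> n" using col_len[OF xiV] colxi by simp
  have P: "path_in (gstar_V V col c xs (i - 1)) gE ps" "odd (length ps - 1)" "ps ! 0 = None"
      "last ps = Some xi" "chord_ok gE ps 1"
    using bp unfolding bad_path_def gE_def xi_def by auto
  define N where "N = length ps"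
  have pne: "ps \<noteq> []" and pd: "distinct ps" and pset: "set ps \<subseteq> insert None (Some ` R)"
    and pcons: "\<And>j. Suc j < N \<Longrightarrow> gE (ps ! j) (ps ! Suc j)"
    using P(1) unfolding path_in_def gstar_V_def R_def N_def by auto
  have Nev: "even N" using P(2) pne unfolding N_def by (cases "length ps") auto
  have "N \<noteq> 0" using pne unfolding N_def by simp
  then have N2: "2 \<le> N" using Nev by presburger
  define L where "L = N - 2"
  define v where "v = (\<lambda>a. the (ps ! Suc a))"
  have gSS: "\<And>u w. u \<in> R \<Longrightarrow> w \<in> R \<Longrightarrow> gE (Some u) (Some w) \<longleftrightarrow> E u w"
    unfolding gE_def gstar_E_def R_def by simp
  have gNS: "\<And>w. gE None (Some w) \<longleftrightarrow> w \<in> R \<and> (\<exists>x\<in>set X. E x w)"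
    unfolding gE_def gstar_E_def gstar_w_adj_def R_def X_def by simp
  have Rprop: "\<And>u. u \<in> R \<longleftrightarrow> u \<in> V \<and> c \<le> col u \<and> u \<notin> set X"
    unfolding R_def gstar_rem_def X_def by auto
  have psv: "ps ! Suc a = Some (v a) \<and> v a \<in> R" if a: "a \<le> L" for a
  proof -
    have sa: "Suc a < N" using a N2 unfolding L_def by simp
    then have "ps ! Suc a \<in> set ps" unfolding N_def by simp
    then have "ps ! Suc a \<in> insert None (Some ` R)" using pset by blast
    moreover have "ps ! Suc a \<noteq> None"
    proof
      assume "ps ! Suc a = None"
      then have "ps ! Suc a = ps ! 0" using P(3) by simp
      then show False using nth_eq_iff_index_eq[OF pd] sa N2 unfolding N_def by fastforce
    qed
    ultimately obtain u where "u \<in> R" "ps ! Suc a = Some u" by blast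
    then show ?thesis unfolding v_def by simp
  qed
  have vR: "\<And>a. a \<le> L \<Longrightarrow> v a \<in> R" using psv by blast
  have vV: "\<And>a. a \<le> L \<Longrightarrow> v a \<in> V" using vR Rprop by blast
  have vX: "\<And>a. a \<le> L \<Longrightarrow> v a \<notin> set X" using vR Rprop by blast
  have vc: "\<And>a. a \<le> L \<Longrightarrow> c \<le> col (v a)" using vR Rprop by blast
  have vL: "v L = xi"
  proof -
    have "last ps = ps ! (N - 1)" using pne unfolding N_def by (simp add: last_conv_nth)
    moreover have "N - 1 = Suc L" using N2 unfolding L_def by simp
    ultimately show ?thesis using psv[of L] P(4) by simp
  qed
  have vinj: "inj_on v {..L}"
  proof (rule inj_onI)
    fix a b assume a: "a \<in> {..L}" and b: "b \<in> {..L}" and e: "v a = v b"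
    then have "ps ! Suc a = ps ! Suc b" using psv by simp
    moreover have "Suc a < length ps" "Suc b < length ps" using a b N2 unfolding L_def N_def by auto
    ultimately show "a = b" using nth_eq_iff_index_eq[OF pd] by simp
  qed
  obtain hc tP where chEq: "chords gE ps = (if hc then {(tP - 1, tP + 1)} else {})"
    and tPb: "hc \<Longrightarrow> 1 < tP \<and> tP + 2 < N"
  proof -
    from P(5) consider "chords gE ps = {}" | t where "1 < t" "t + 2 < length ps" "chords gE ps = {(t - 1, t + 1)}"
      unfolding chord_ok_def by blast
    then show thesis
    proof cases
      case 1 then show ?thesis using that[of False 0] by simp
    next
      case 2 then show ?thesis using that[of True t] unfolding N_def by simp
    qed
  qed
  define tc where "tc = tP - 1"
  have chmem: "gE (ps!j) (ps!k) \<longleftrightarrow> (hc \<and> j = tP - 1 \<and> k = tP + 1)" if "j + 2 \<le> k" "k < N" for j k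
  proof -
    have "(j,k) \<in> chords gE ps \<longleftrightarrow> gE (ps!j) (ps!k)" unfolding chords_def using that N_def by simp
    then show ?thesis using chEq by (cases hc) auto
  qed
  have cX: "\<not> (\<exists>x\<in>set X. E x (v a))" if a: "1 \<le> a" "a \<le> L" for a
  proof
    assume ex: "\<exists>x\<in>set X. E x (v a)"
    have "gE (ps ! 0) (ps ! Suc a)" using ex psv[OF a(2)] P(3) gNS by simp
    moreover have "Suc a < N" using a N2 unfolding L_def by simp
    ultimately have "hc \<and> 0 = tP - 1" using chmem[of 0 "Suc a"] a by auto
    then show False using tPb by simp
  qed
  have c2: "\<exists>x\<in>set X. E x (v 0)"
  proof -
    have "gE (ps ! 0) (ps ! Suc 0)" using pcons[of 0] N2 by simp
    then show ?thesis using psv[of 0] P(3) gNS by simp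
  qed
  have consv: "E (v a) (v (Suc a))" if "a < L" for a
  proof -
    have "gE (ps ! Suc a) (ps ! Suc (Suc a))" using pcons[of "Suc a"] that unfolding L_def by simp
    then show ?thesis using psv[of a] psv[of "Suc a"] that gSS by simp
  qed
  have adjlt: "E (v a) (v b) \<longleftrightarrow> (b = Suc a \<or> (hc \<and> Suc a = tc \<and> b = Suc tc))" if ab: "a < b" "b \<le> L" for a b
  proof (cases "b = Suc a")
    case True then show ?thesis using consv[of a] ab by simp
  next
    case False
    then have "Suc a + 2 \<le> Suc b" "Suc b < N" using ab N2 unfolding L_def by auto
    then have "gE (ps ! Suc a) (ps ! Suc b) \<longleftrightarrow> (hc \<and> Suc a = tP - 1 \<and> Suc b = tP + 1)" using chmem by blast
    moreover have "gE (ps ! Suc a) (ps ! Suc b) \<longleftrightarrow> E (v a) (v b)" using psv[of a] psv[of b] ab gSS by simp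
    moreover have "(hc \<and> Suc a = tP - 1 \<and> Suc b = tP + 1) \<longleftrightarrow> (hc \<and> Suc a = tc \<and> b = Suc tc)"
      using tPb unfolding tc_def by auto
    ultimately show ?thesis using False by simp
  qed
  have tcb: "hc \<Longrightarrow> 1 \<le> tc \<and> tc + 2 \<le> L" using tPb unfolding tc_def L_def by auto
  have adj: "E (v a) (v b) \<longleftrightarrow> (a = Suc b \<or> b = Suc a \<or> (hc \<and> ((Suc a = tc \<and> b = Suc tc) \<or> (Suc b = tc \<and> a = Suc tc))))"
    if "a \<le> L" "b \<le> L" for a b
  proof -
    consider "a < b" | "a = b" | "b < a" by linarith
    then show ?thesis
    proof cases
      case 1 then show ?thesis using adjlt[of a b] that by auto
    next
      case 2 then show ?thesis using irrE by auto
    next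
      case 3
      have "E (v a) (v b) \<longleftrightarrow> E (v b) (v a)" using symE by blast
      then show ?thesis using adjlt[of b a] 3 that by auto
    qed
  qed
  have L2: "2 \<le> L"
  proof (rule ccontr)
    assume "\<not> 2 \<le> L"
    then have "L = 0" using Nev N2 unfolding L_def by presburger
    then have "v 0 = xi" using vL by simp
    then obtain x where "x \<in> set X" "E x xi" using c2 by auto
    then show False using proper Xcol colxi by fastforce
  qed
  have Lev: "even L" using Nev N2 unfolding L_def by simp
  have col0: "c < col (v 0)"
  proof -
    obtain x where "x \<in> set X" "E x (v 0)" using c2 by blast
    then have "col (v 0) \<noteq> c" using proper Xcol by fastforce
    then show ?thesis using vc[of 0] by simp
  qed
  have n0L: "\<not> E (v 0) (v L)" using adj[of 0 L] L2 tcb by auto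
  have nox: "\<forall>j<s. E (\<sigma>!j) (\<sigma>!s) \<longrightarrow> col (\<sigma>!j) \<noteq> c" using proper s colxi by auto
  have F5: "\<exists>x\<in>set X. E x (\<sigma>!j)" if js: "j < s" and jc: "c < col (\<sigma>!j)" for j
  proof -
    have jn: "j < n" using js s(1) by simp
    obtain j' where j': "j' < j" "E (\<sigma>!j') (\<sigma>!j)" "col (\<sigma>!j') = c"
      using col_below[OF jn _ jc] c1 by auto
    have "j' < s" using j'(1) js by simp
    then have "\<sigma>!j' \<in> set X" using Xmem j'(3) by blast
    then show ?thesis using j' by blast
  qed
  have posv: "s < q" if a: "1 \<le> a" "a < L" and q: "q < n" "\<sigma>!q = v a" for a q
  proof -
    have "\<not> q < s"
    proof
      assume qs: "q < s"
      show False
      proof (cases "col (v a) = c")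
        case True then show False using Xmem qs q vX[of a] a by auto
      next
        case False then have "c < col (\<sigma>!q)" using vc[of a] a q by simp
        then show False using F5[OF qs] cX[of a] a q by auto
      qed
    qed
    moreover have "q \<noteq> s"
    proof
      assume "q = s"
      then have e: "v a = v L" using q s vL by simp
      have "a = L" using inj_onD[OF vinj e] a by simp
      then show False using a by simp
    qed
    ultimately show ?thesis by simp
  qed
  have zex: "\<exists>z. z \<in> V \<and> c < col z \<and> (\<exists>x\<in>set X. E x z) \<and> E z xi \<and>
      (\<not> E z (v 0) \<or> (\<not> E (v 0) (v 2) \<and> \<not> E z (v 1)) \<or> (E (v 0) (v 2) \<and> \<not> E z (v 2)))"
  proof -
    obtain q0 where q0: "q0 < n" "\<sigma>!q0 = v 0" using vpos vV[of 0] by blast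
    have zfromj: "\<exists>z. z = \<sigma>!j \<and> z \<in> V \<and> c < col z \<and> (\<exists>x\<in>set X. E x z) \<and> E z xi"
      if "j < s" "E (\<sigma>!j) (\<sigma>!s)" "c < col (\<sigma>!j)" for j
      using that F5[of j] s setV nth_mem[of j \<sigma>] by auto
    have q0s: "q0 \<noteq> s"
    proof
      assume "q0 = s" then have e: "v 0 = v L" using q0 s vL by simp
      have "0 = L" using inj_onD[OF vinj e] by simp
      then show False using L2 by simp
    qed
    show ?thesis
    proof (cases "s < q0")
      case True
      obtain x where x: "x \<in> set X" "E x (v 0)" using c2 by blast
      then obtain jx where "jx < s" "\<sigma>!jx = x" "col x = c" using Xmem by blast
      then have yc: "\<exists>j<s. E (\<sigma>!j) (\<sigma>!q0) \<and> col (\<sigma>!j) = c" using x q0 by auto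
      obtain j where "j < s" "E (\<sigma>!j) (\<sigma>!s)" "c < col (\<sigma>!j)" "\<not> E (\<sigma>!j) (\<sigma>!q0)"
        using lexA[OF s(1) True q0(1) c1 nox yc cn] by blast
      then show ?thesis using zfromj[of j] q0 by auto
    next
      case False
      then have q0l: "q0 < s" using q0s by simp
      have u: "E (\<sigma>!q0) (\<sigma>!s) = False" using n0L q0 s vL by simp
      show ?thesis
      proof (cases "E (v 0) (v 2)")
        case False
        obtain q1 where q1: "q1 < n" "\<sigma>!q1 = v 1" using vpos vV[of 1] L2 by fastforce
        have "1 < L" using L2 by simp
        then have "s < q1" using posv[of 1 q1] q1 by simp
        moreover have "E (\<sigma>!q0) (\<sigma>!q1)" using consv[of 0] L2 q0 q1 by simp
        ultimately obtain j where "j < s" "E (\<sigma>!j) (\<sigma>!s)" "c < col (\<sigma>!j)" "\<not> E (\<sigma>!j) (\<sigma>!q1) \<or> \<not> E (\<sigma>!j) (\<sigma>!q0)"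
          using lexB[OF s(1) _ q1(1) c1 nox q0l _ _ ] col0 q0 u by (metis (full_types))
        then show ?thesis using zfromj[of j] q0 q1 False by auto
      next
        case True
        then have "hc \<and> tc = 1" using adj[of 0 2] L2 by auto
        then have L3: "3 \<le> L" using tcb by simp
        obtain q2 where q2: "q2 < n" "\<sigma>!q2 = v 2" using vpos vV[of 2] L2 by fastforce
        have "s < q2" using posv[of 2 q2] q2 L3 by simp
        moreover have "E (\<sigma>!q0) (\<sigma>!q2)" using True q0 q2 by simp
        ultimately obtain j where "j < s" "E (\<sigma>!j) (\<sigma>!s)" "c < col (\<sigma>!j)" "\<not> E (\<sigma>!j) (\<sigma>!q2) \<or> \<not> E (\<sigma>!j) (\<sigma>!q0)"
          using lexB[OF s(1) _ q2(1) c1 nox q0l _ _ ] col0 q0 u by (metis (full_types))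
        then show ?thesis using zfromj[of j] q0 q2 True by auto
      qed
    qed
  qed
  then obtain z where z: "z \<in> V" "c < col z" "\<exists>x\<in>set X. E x z" "E z xi"
    and zc: "\<not> E z (v 0) \<or> (\<not> E (v 0) (v 2) \<and> \<not> E z (v 1)) \<or> (E (v 0) (v 2) \<and> \<not> E z (v 2))"
    by blast
  have zX: "z \<notin> set xs" using z(2) xsc by auto
  have zv: "z \<noteq> v a" if "a \<le> L" for a
  proof
    assume e: "z = v a"
    show False
    proof (cases "a = 0")
      case True then show False using e z(4) vL n0L by simp
    next
      case False then show False using cX[of a] that z(3) e by simp
    qed
  qed
  have zL: "E z (v L)" using z(4) vL by simp
  show ?thesis
  proof (cases "\<exists>x\<in>set X. E x (v 0) \<and> E x z")
    case True
    then obtain x where x: "x \<in> set X" "E x (v 0)" "E x z" by blast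
    define f where "f = (\<lambda>j. if j = 0 then x else v (j - 1))"
    define CS where "CS = (if hc then {(tc, tc + 2)} else {})"
    have xv: "\<And>a. a \<le> L \<Longrightarrow> x \<noteq> v a" using x(1) vX by blast
    have xV: "x \<in> V" using x(1) Xsub xsV by blast
    have f0: "f 0 = x" and fS: "\<And>j. f (Suc j) = v j" unfolding f_def by auto
    have key: "E (f j) (f k) \<longleftrightarrow> (hc \<and> j = tc \<and> k = tc + 2)" if jk: "j + 2 \<le> k" "k < L + 2" for j k
    proof (cases j)
      case 0
      obtain k' where k': "k = Suc k'" "1 \<le> k'" "k' \<le> L" using jk 0 by (cases k) auto
      have "\<not> E x (v k')" using cX[OF k'(2,3)] x(1) by blast
      moreover have "\<not> (hc \<and> j = tc)" using tcb 0 by auto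
      ultimately show ?thesis using 0 k' f0 fS by simp
    next
      case (Suc j')
      obtain k' where k': "k = Suc k'" "k' \<le> L" "j' < k'" using jk Suc by (cases k) auto
      have "E (v j') (v k') \<longleftrightarrow> (k' = Suc j' \<or> (hc \<and> Suc j' = tc \<and> k' = Suc tc))" by (rule adjlt[OF k'(3) k'(2)])
      then show ?thesis using Suc k' fS jk by auto
    qed
    have CH: "{(j,k). j + 2 \<le> k \<and> k < L + 2 \<and> E (f j) (f k)} = CS"
    proof (rule set_eqI)
      fix p :: "nat \<times> nat"
      obtain j k where p: "p = (j,k)" by (cases p)
      show "p \<in> {(j,k). j + 2 \<le> k \<and> k < L + 2 \<and> E (f j) (f k)} \<longleftrightarrow> p \<in> CS"
      proof
        assume "p \<in> {(j,k). j + 2 \<le> k \<and> k < L + 2 \<and> E (f j) (f k)}"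
        then have "j + 2 \<le> k" "k < L + 2" "E (f j) (f k)" using p by auto
        then show "p \<in> CS" using key p unfolding CS_def by auto
      next
        assume "p \<in> CS"
        then have "hc" "j = tc" "k = tc + 2" using p unfolding CS_def by (auto split: if_splits)
        moreover then have "j + 2 \<le> k" "k < L + 2" using tcb by auto
        ultimately show "p \<in> {(j,k). j + 2 \<le> k \<and> k < L + 2 \<and> E (f j) (f k)}" using key p by auto
      qed
    qed
    have e02: "E (v 0) (v 2) \<longleftrightarrow> hc \<and> tc = 1" using adjlt[of 0 2] L2 by auto
    have "near_obstruction V E (map f [0..<L + 2]) z"
    proof (rule near_intro[where CS = CS])
      show "4 \<le> L + 2" using L2 by simp
      show "even (L + 2)" using Lev by simp
      show "inj_on f {..<L + 2}"
      proof (rule inj_onI)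
        fix a b assume a: "a \<in> {..<L+2}" and b: "b \<in> {..<L+2}" and e: "f a = f b"
        show "a = b"
        proof (cases a)
          case a0: 0
          show ?thesis
          proof (cases b)
            case 0 then show ?thesis using a0 by simp
          next
            case (Suc b')
            then have "x = v b'" using e a0 f0 fS by simp
            moreover have "b' \<le> L" using b Suc by simp
            ultimately show ?thesis using xv by blast
          qed
        next
          case (Suc a')
          show ?thesis
          proof (cases b)
            case 0
            then have "x = v a'" using e Suc f0 fS by simp
            moreover have "a' \<le> L" using a Suc by simp
            ultimately show ?thesis using xv by blast
          next
            case (Suc b')
            then have "v a' = v b'" using e \<open>a = Suc a'\<close> fS by simp
            then have "a' = b'" using inj_onD[OF vinj] a b Suc \<open>a = Suc a'\<close> by auto
            then show ?thesis using Suc \<open>a = Suc a'\<close> by simp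
          qed
        qed
      qed
      show "\<And>j. j < L + 2 \<Longrightarrow> f j \<in> V" using xV vV unfolding f_def by auto
      show "\<And>j. Suc j < L + 2 \<Longrightarrow> E (f j) (f (Suc j))"
      proof -
        fix j assume j: "Suc j < L + 2"
        show "E (f j) (f (Suc j))"
        proof (cases j)
          case 0 then show ?thesis using x(2) f0 fS by simp
        next
          case (Suc j') then show ?thesis using consv[of j'] j fS by simp
        qed
      qed
      show "z \<in> V" using z(1) .
      show "\<And>j. j < L + 2 \<Longrightarrow> z \<noteq> f j"
      proof -
        fix j assume j: "j < L + 2"
        show "z \<noteq> f j"
        proof (cases j)
          case 0 then show ?thesis using f0 x(1) Xsub zX by auto
        next
          case (Suc j') then show ?thesis using zv[of j'] j fS by simp
        qed
      qed
      show "E z (f 0)" using symE[OF x(3)] f0 by simp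
      show "E z (f (L + 2 - 1))" using zL fS by simp
      show "{(j,k). j + 2 \<le> k \<and> k < L + 2 \<and> E (f j) (f k)} = CS" by (rule CH)
      show "CS = {} \<or> (\<exists>t. 0 < t \<and> t + 2 < L + 2 \<and> CS = {(t - 1, t + 1)})"
      proof (cases hc)
        case True then show ?thesis unfolding CS_def using tcb by (intro disjI2 exI[of _ "tc + 1"]) auto
      qed (simp add: CS_def)
      have f123: "f 1 = v 0" "f 2 = v 1" "f 3 = v 2" using fS by (auto simp: numeral_eq_Suc)
      have n02: "(0,2) \<notin> CS" unfolding CS_def using tcb by auto
      have i13: "(1,3) \<in> CS \<longleftrightarrow> E (v 0) (v 2)" unfolding CS_def using e02 by auto
      have cs13: "E (v 0) (v 2) \<Longrightarrow> CS = {(1,3)}" unfolding CS_def using e02 by auto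
      show "(CS = {(0,2)} \<and> \<not> E z (f 1) \<and> \<not> E z (f 2)) \<or> (CS = {(1,3)} \<and> (\<not> E z (f 1) \<or> \<not> E z (f 3)))
       \<or> ((0,2) \<notin> CS \<and> \<not> E z (f 1)) \<or> ((0,2) \<notin> CS \<and> (1,3) \<notin> CS \<and> E z (f 1) \<and> \<not> E z (f 2))"
        unfolding f123 using zc n02 i13 cs13 by blast
    qed
    then show ?thesis by blast
  next
    case False
    note noJK = False
    interpret H: hubctx V E v L hc tc z
    proof
      show "\<And>a b. E a b \<Longrightarrow> E b a" by (rule symE)
      show "even L" by (rule Lev)
      show "2 \<le> L" by (rule L2)
      show "inj_on v {..L}" by (rule vinj)
      show "\<And>a. a \<le> L \<Longrightarrow> v a \<in> V" by (rule vV)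
      show "z \<in> V" by (rule z(1))
      show "\<And>a. a \<le> L \<Longrightarrow> z \<noteq> v a" by (rule zv)
      show "hc \<Longrightarrow> 1 \<le> tc \<and> tc + 2 \<le> L" by (rule tcb)
      show "\<And>a b. a \<le> L \<Longrightarrow> b \<le> L \<Longrightarrow> E (v a) (v b) \<longleftrightarrow>
        (a = Suc b \<or> b = Suc a \<or> (hc \<and> ((Suc a = tc \<and> b = Suc tc) \<or> (Suc b = tc \<and> a = Suc tc))))" by (rule adj)
      show "E z (v L)" by (rule zL)
    qed
    have hubres: "(\<exists>ps z'. near_obstruction V E ps z') \<or> (\<exists>C. H.corep C)" by (rule H.hub)
    show ?thesis
    proof (cases "\<exists>ps z'. near_obstruction V E ps z'")
      case True then show ?thesis by blast
    next
      case False
      then obtain C where C: "H.corep C" using hubres by blast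
      have Cp: "C \<noteq> []" "distinct C" "\<forall>j. Suc j < length C \<longrightarrow> E (C!j) (C!Suc j)" "C!0 = v 0" "last C = z"
        "set C \<subseteq> v ` {..L} \<union> {z}" "even (length C)" "good_core E C"
        using C unfolding H.corep_def by auto
      define l where "l = length C"
      have l0: "0 < l" using Cp(1) unfolding l_def by simp
      have Cel: "C!j = z \<or> (\<exists>a\<le>L. C!j = v a)" if "j < l" for j
      proof -
        have "C!j \<in> set C" using that unfolding l_def by simp
        then show ?thesis using Cp(6) by auto
      qed
      have Clast: "C ! (l - 1) = z" using Cp(1,5) unfolding l_def by (simp add: last_conv_nth)
      have Cnz: "C!j \<noteq> z" if "j < l" "j \<noteq> l - 1" for j
      proof
        assume "C!j = z"
        then have "C!j = C!(l - 1)" using Clast by simp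
        then show False using nth_eq_iff_index_eq[OF Cp(2)] that l0 unfolding l_def by auto
      qed
      have Cnv0: "C!j \<noteq> v 0" if "j < l" "j \<noteq> 0" for j
      proof
        assume "C!j = v 0"
        then have "C!j = C!0" using Cp(4) by simp
        then show False using nth_eq_iff_index_eq[OF Cp(2)] that l0 unfolding l_def by auto
      qed
      have take_mem: "y \<in> set (take m xs) \<longleftrightarrow> (\<exists>a<m. xs!a = y)" if "m \<le> length xs" for m y
        using that by (auto simp: in_set_conv_nth)
      have Xnth: "y \<in> set X \<longleftrightarrow> (\<exists>a<i - 1. xs!a = y)" for y unfolding X_def using take_mem i1 by simp
      have xaX: "xs!a \<in> set X" if "a < i - 1" for a using Xnth that by blast
      have takeX: "set (take m xs) \<subseteq> set X" if "m \<le> i - 1" for m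
        unfolding X_def using that by (rule set_take_subset_set_take)
      obtain aj where aj: "aj < i - 1" "E (xs!aj) (v 0)" "\<And>a. a < aj \<Longrightarrow> \<not> E (xs!a) (v 0)"
      proof -
        obtain x0 where x0: "x0 \<in> set X" "E x0 (v 0)" using c2 by blast
        then obtain a1 where "a1 < i - 1" "xs!a1 = x0" using Xnth by blast
        then have ex: "\<exists>a. a < i - 1 \<and> E (xs!a) (v 0)" using x0 by blast
        define a0 where "a0 = (LEAST a. a < i - 1 \<and> E (xs!a) (v 0))"
        have "a0 < i - 1 \<and> E (xs!a0) (v 0)" unfolding a0_def by (rule LeastI_ex[OF ex])
        then have a0P: "a0 < i - 1" "E (xs!a0) (v 0)" by auto
        have a0m: "\<not> E (xs!a) (v 0)" if "a < a0" for a
        proof -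
          have "\<not> (a < i - 1 \<and> E (xs!a) (v 0))" using that unfolding a0_def by (rule not_less_Least)
          then show "\<not> E (xs!a) (v 0)" using that a0P(1) by simp
        qed
        show thesis by (rule that[OF a0P a0m])
      qed
      obtain ak where ak: "ak < i - 1" "E (xs!ak) z" "\<And>a. a < ak \<Longrightarrow> \<not> E (xs!a) z"
      proof -
        obtain x0 where x0: "x0 \<in> set X" "E x0 (z)" using z(3) by blast
        then obtain a1 where "a1 < i - 1" "xs!a1 = x0" using Xnth by blast
        then have ex: "\<exists>a. a < i - 1 \<and> E (xs!a) (z)" using x0 by blast
        define a0 where "a0 = (LEAST a. a < i - 1 \<and> E (xs!a) z)"
        have "a0 < i - 1 \<and> E (xs!a0) z" unfolding a0_def by (rule LeastI_ex[OF ex])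
        then have a0P: "a0 < i - 1" "E (xs!a0) z" by auto
        have a0m: "\<not> E (xs!a) z" if "a < a0" for a
        proof -
          have "\<not> (a < i - 1 \<and> E (xs!a) z)" using that unfolding a0_def by (rule not_less_Least)
          then show "\<not> E (xs!a) z" using that a0P(1) by simp
        qed
        show thesis by (rule that[OF a0P a0m])
      qed
      have ajak: "aj \<noteq> ak" using noJK aj ak xaX by blast
      have Dsub: "set C \<subseteq> gstar_rem V col c xs m" if "m \<le> i - 1" for m
      proof
        fix y assume y: "y \<in> set C"
        then obtain j where j: "j < l" "C!j = y" unfolding l_def by (metis in_set_conv_nth)
        show "y \<in> gstar_rem V col c xs m"
        proof (cases "y = z")
          case True
          have "z \<notin> set (take m xs)" using zX in_set_takeD by fastforce
          then show ?thesis using True z(1,2) unfolding gstar_rem_def by simp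
        next
          case False
          then obtain a where a: "a \<le> L" "y = v a" using Cel[OF j(1)] j(2) by auto
          then show ?thesis using vV vc vX takeX[OF that] unfolding gstar_rem_def by auto
        qed
      qed
      have notinC: "xs!a \<notin> set C" if "a < i - 1" for a
      proof
        assume "xs!a \<in> set C"
        then obtain j where j: "j < l" "C!j = xs!a" unfolding l_def by (metis in_set_conv_nth)
        have xX: "xs!a \<in> set X" using xaX that by blast
        show False
        proof (cases "xs!a = z")
          case True then show False using zX xX Xsub by auto
        next
          case False
          then obtain b where "b \<le> L" "xs!a = v b" using Cel[OF j(1)] j(2) by auto
          then show False using vX xX by auto
        qed
      qed
      consider (fw) "aj < ak" | (rv) "ak < aj" using ajak by linarith
      then show ?thesis
      proof cases
        case fw
        have bpk: "bad_path V E col c xs (Suc ak) (None # map Some C @ [Some (xs!ak)])"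
        proof (rule core_to_bad[OF symE proper xsd xsV xsc])
          show "ak < length xs" using ak(1) i1 by simp
          show "C \<noteq> []" "distinct C" "\<forall>j. Suc j < length C \<longrightarrow> E (C!j) (C!Suc j)" using Cp by auto
          show "set C \<subseteq> gstar_rem V col c xs ak" using Dsub ak(1) by simp
          show "good_core E C" "even (length C)" using Cp by auto
          show "\<exists>x\<in>set (take ak xs). E x (C!0)" using take_mem[of ak] ak(1) i1 fw aj(2) Cp(4) by auto
          show "\<not> (\<exists>x\<in>set (take ak xs). E x (C!j))" if "0 < j" "j < length C" for j
          proof
            assume "\<exists>x\<in>set (take ak xs). E x (C!j)"
            then obtain a where a: "a < ak" "E (xs!a) (C!j)" using take_mem[of ak] ak(1) i1 by auto
            have jl: "j < l" using that unfolding l_def by simp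
            show False
            proof (cases "C!j = z")
              case True then show False using ak(3)[OF a(1)] a(2) by simp
            next
              case False
              then obtain b where b: "b \<le> L" "C!j = v b" using Cel[OF jl] by auto
              have "b \<noteq> 0"
              proof
                assume "b = 0" then show False using Cnv0[OF jl] that b by simp
              qed
              then have "\<not> (\<exists>x\<in>set X. E x (v b))" using cX b by simp
              moreover have "xs!a \<in> set X" using xaX a(1) ak(1) by simp
              ultimately show False using a(2) b by auto
            qed
          qed
          show "E (last C) (xs!ak)" using Cp(5) symE[OF ak(2)] by simp
          show "\<not> E (C!j) (xs!ak)" if "Suc j < length C" for j
          proof
            assume e: "E (C!j) (xs!ak)"
            have jl: "j < l" "j \<noteq> l - 1" using that unfolding l_def by auto
            obtain b where b: "b \<le> L" "C!j = v b" using Cel[OF jl(1)] Cnz[OF jl] by auto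
            have xX: "xs!ak \<in> set X" using xaX ak(1) by simp
            show False
            proof (cases "b = 0")
              case True then show False using noJK xX symE[OF e] b ak(2) by auto
            next
              case False then show False using cX[of b] b xX symE[OF e] by auto
            qed
          qed
          show "xs!ak \<notin> set C" using notinC ak(1) by simp
        qed
        have "2 \<le> Suc ak" "Suc ak < i" using fw ak(1) by auto
        then show ?thesis using IH bpk by blast
      next
        case rv
        have lr: "length (rev C) = l" unfolding l_def by simp
        have revnth: "rev C ! j = C ! (l - 1 - j)" if "j < l" for j using that unfolding l_def by (simp add: rev_nth)
        have bpk: "bad_path V E col c xs (Suc aj) (None # map Some (rev C) @ [Some (xs!aj)])"
        proof (rule core_to_bad[OF symE proper xsd xsV xsc])
          show "aj < length xs" using aj(1) i1 by simp
          show "rev C \<noteq> []" "distinct (rev C)" using Cp by auto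
          show "\<forall>j. Suc j < length (rev C) \<longrightarrow> E (rev C!j) (rev C!Suc j)"
            by (rule rev_cons_adj[OF symE Cp(3)])
          show "set (rev C) \<subseteq> gstar_rem V col c xs aj" using Dsub aj(1) by simp
          show "good_core E (rev C)" by (rule good_core_rev[OF symE Cp(8)])
          show "even (length (rev C))" using Cp by simp
          have r0: "rev C ! 0 = z" using revnth[OF l0] Clast by simp
          show "\<exists>x\<in>set (take aj xs). E x (rev C!0)" using take_mem[of aj] aj(1) i1 rv ak(2) r0 by auto
          show "\<not> (\<exists>x\<in>set (take aj xs). E x (rev C!j))" if "0 < j" "j < length (rev C)" for j
          proof
            assume "\<exists>x\<in>set (take aj xs). E x (rev C!j)"
            then obtain a where a: "a < aj" "E (xs!a) (rev C!j)" using take_mem[of aj] aj(1) i1 by auto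
            have jl: "l - 1 - j < l" "l - 1 - j \<noteq> l - 1" using that lr by auto
            have rj: "rev C ! j = C ! (l - 1 - j)" using revnth that lr by simp
            obtain b where b: "b \<le> L" "C ! (l - 1 - j) = v b" using Cel[OF jl(1)] Cnz[OF jl] by auto
            show False
            proof (cases "b = 0")
              case True then show False using aj(3)[OF a(1)] a(2) rj b by simp
            next
              case False
              then have "\<not> (\<exists>x\<in>set X. E x (v b))" using cX b by simp
              moreover have "xs!a \<in> set X" using xaX a(1) aj(1) by simp
              ultimately show False using a(2) b rj by auto
            qed
          qed
          have lastr: "last (rev C) = v 0" using Cp(1,4) by (simp add: last_rev hd_conv_nth)
          show "E (last (rev C)) (xs!aj)" using lastr symE[OF aj(2)] by simp
          show "\<not> E (rev C!j) (xs!aj)" if "Suc j < length (rev C)" for j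
          proof
            assume e: "E (rev C!j) (xs!aj)"
            have jl: "l - 1 - j < l" "l - 1 - j \<noteq> 0" using that lr by auto
            have rj: "rev C ! j = C ! (l - 1 - j)" using revnth that lr by simp
            have xX: "xs!aj \<in> set X" using xaX aj(1) by simp
            show False
            proof (cases "C ! (l - 1 - j) = z")
              case True then show False using noJK xX symE[OF e] rj aj(2) by auto
            next
              case False
              then obtain b where b: "b \<le> L" "C ! (l - 1 - j) = v b" using Cel[OF jl(1)] by auto
              have "b \<noteq> 0"
              proof
                assume "b = 0" then show False using Cnv0[OF jl] b by simp
              qed
              then show False using cX[of b] b xX symE[OF e] rj by auto
            qed
          qed
          show "xs!aj \<notin> set (rev C)" using notinC aj(1) by simp
        qed
        have "2 \<le> Suc aj" "Suc aj < i" using rv aj(1) by auto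
        then show ?thesis using IH bpk by blast
      qed
    qed
  qed
qed

end

theorem lemma1:
  fixes V :: "'a set" and E :: "'a \<Rightarrow> 'a \<Rightarrow> bool" and \<sigma> :: "'a list"
    and col :: "'a \<Rightarrow> nat" and q :: "nat \<Rightarrow> 'a" and c i :: nat
  assumes "graph V E"
    and "lexcolor_run V E \<sigma> col"
    and "clique_run V E col (card (col ` V)) q"
    and "clique_first_fail E (card (col ` V)) q c"
    and "2 \<le> i" and "i \<le> length (filter (\<lambda>v. col v = c) \<sigma>)"
    and "\<exists>ps. bad_path V E col c (filter (\<lambda>v. col v = c) \<sigma>) i ps"
  shows "\<exists>ps z. near_obstruction V E ps z"
proof -
  interpret L: lexs V E \<sigma> col by (rule lexs.intro[OF assms(1,2)])
  define xs where "xs = filter (\<lambda>v. col v = c) \<sigma>"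
  have main: "2 \<le> k \<Longrightarrow> k \<le> length xs \<Longrightarrow> (\<exists>ps. bad_path V E col c xs k ps) \<Longrightarrow> \<exists>ps z. near_obstruction V E ps z" for k
  proof (induction k rule: less_induct)
    case (less k)
    obtain ps where ps: "bad_path V E col c xs k ps" using less.prems(3) by blast
    show ?case
    proof (rule L.step[OF xs_def less.prems(1) less.prems(2) ps])
      fix k' ps' assume "2 \<le> k'" "k' < k" "bad_path V E col c xs k' ps'"
      then show "\<exists>ps z. near_obstruction V E ps z" using less.IH less.prems(2) by fastforce
    qed
  qed
  show ?thesis using main[of i] assms(5,6,7) unfolding xs_def by blast
qed

end
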